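(* Let $l\ge0$, $\vec m\in\mathbb{Z}_+^l$ and $\mu,\mu'\in M_F(M_F(\mathbb{R}^d)^l)$. If $$E_\mu\Big[\prod_{i=1}^l\prod_{j=1}^{m_i}Y_i(\phi_{ij})\Big]=E_{\mu'}\Big[\prod_{i=1}^l\prod_{j=1}^{m_i}Y_i(\phi_{ij})\Big]$$ holds, with both sides finite, for every choice of $\phi_{ij}\in\mathcal{F}$, then the same identity holds for every choice of bounded continuous $\phi_{ij}:\mathbb{R}^d\to[0,\infty)$.
   Context: $M_F(E)$ denotes finite Borel measures on a separable metric space $E$ with the weak topology; $(Y_1,\dots,Y_l)$ is the coordinate variable on $M_F(\mathbb{R}^d)^l$, $Y_i(\phi)=\int\phi\,dY_i$, and $E_\mu[\cdot]=\int\cdot\,d\mu$. Standing assumption: $\mathcal{F}$ is a class of $\mathbb{C}$-valued bounded continuous functions on $\mathbb{R}^d$ that is closed under complex conjugation, is convergence determining for $M_F(\mathbb{R}^d)$, and contains the constant function $1$. Empty products equal $1$. *)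

theory Defs
  imports "HOL-Analysis.Analysis"
begin

definition MF_set :: "('a::euclidean_space) measure set" where
  "MF_set = {N. sets N = sets borel \<and> finite_measure N}"

definition bcont :: "('a::euclidean_space \<Rightarrow> real) \<Rightarrow> bool" where
  "bcont f \<longleftrightarrow> continuous_on UNIV f \<and> bounded (range f)"

definition weak_topology :: "('a::euclidean_space) measure topology" where
  "weak_topology = topology_generated_by
     (insert MF_set {{N \<in> MF_set. (\<integral>x. f x \<partial>N) \<in> U} | f U. bcont f \<and> open U})"

definition borel_of :: "'b topology \<Rightarrow> 'b measure" where
  "borel_of X = sigma (topspace X) {U. openin X U}"

definition MFl :: "nat \<Rightarrow> (nat \<Rightarrow> ('a::euclidean_space) measure) measure" where
  "MFl l = borel_of (product_topology (\<lambda>_. weak_topology) {..<l})"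

definition weak_conv :: "(nat \<Rightarrow> ('a::euclidean_space) measure) \<Rightarrow> 'a measure \<Rightarrow> bool" where
  "weak_conv Ns N \<longleftrightarrow> (\<forall>f. bcont f \<longrightarrow> (\<lambda>n. \<integral>x. f x \<partial>Ns n) \<longlonglongrightarrow> (\<integral>x. f x \<partial>N))"

definition conv_determining :: "(('a::euclidean_space) \<Rightarrow> complex) set \<Rightarrow> bool" where
  "conv_determining F \<longleftrightarrow>
     (\<forall>Ns N. (\<forall>n. Ns n \<in> MF_set) \<longrightarrow> N \<in> MF_set \<longrightarrow>
        (\<forall>f\<in>F. (\<lambda>n. \<integral>x. f x \<partial>Ns n) \<longlonglongrightarrow> (\<integral>x. f x \<partial>N)) \<longrightarrow> weak_conv Ns N)"

definition standing_F :: "(('a::euclidean_space) \<Rightarrow> complex) set \<Rightarrow> bool" where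
  "standing_F F \<longleftrightarrow>
     (\<forall>f\<in>F. continuous_on UNIV f \<and> bounded (range f)) \<and>
     (\<forall>f\<in>F. (\<lambda>x. cnj (f x)) \<in> F) \<and>
     conv_determining F \<and> (\<lambda>_. 1) \<in> F"

end

theory Submission
  imports Defs
begin


lemma topspace_weak: "topspace (weak_topology :: ('a::euclidean_space) measure topology) = MF_set"
  unfolding weak_topology_def by auto

lemma cont_integral_weak:
  fixes f :: "'a::euclidean_space \<Rightarrow> real"
  assumes "bcont f"
  shows "continuous_map weak_topology euclideanreal (\<lambda>N. \<integral>x. f x \<partial>N)"
  unfolding continuous_map_def topspace_weak
proof safe
  fix U assume "openin euclideanreal U"
  hence "open U" by simp
  have "{N \<in> MF_set. (\<integral>x. f x \<partial>N) \<in> U} \<in> insert MF_set {{N \<in> MF_set. (\<integral>x. f x \<partial>N) \<in> U} | f U. bcont f \<and> open U}"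
    using assms \<open>open U\<close> by blast
  thus "openin weak_topology {N \<in> MF_set. (\<integral>x. f x \<partial>N) \<in> U}"
    unfolding weak_topology_def by (rule topology_generated_by_Basis)
qed auto

lemma borel_of_measurable:
  assumes "continuous_map X euclidean g"
  shows "g \<in> borel_measurable (borel_of X)"
proof -
  have sp: "space (borel_of X) = topspace X"
    unfolding borel_of_def by (rule space_measure_of) (auto dest: openin_subset)
  show ?thesis
    unfolding borel_def
  proof (rule measurable_measure_of)
    show "g \<in> space (borel_of X) \<rightarrow> UNIV" by auto
    fix U :: "'b set" assume "U \<in> {S. open S}"
    hence "openin X {x \<in> topspace X. g x \<in> U}" using assms by (auto simp: continuous_map_def)
    moreover have "g -` U \<inter> space (borel_of X) = {x \<in> topspace X. g x \<in> U}" using sp by auto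
    ultimately show "g -` U \<inter> space (borel_of X) \<in> sets (borel_of X)"
      unfolding borel_of_def
      by (subst sets_measure_of) (auto dest: openin_subset intro: sigma_sets.Basic)
  qed auto
qed

lemma space_MFl: "space (MFl l :: (nat \<Rightarrow> ('a::euclidean_space) measure) measure) = PiE {..<l} (\<lambda>_. MF_set)"
proof -
  have "space (MFl l :: (nat \<Rightarrow> 'a measure) measure) = topspace (product_topology (\<lambda>_. weak_topology :: 'a measure topology) {..<l})"
    unfolding MFl_def borel_of_def by (rule space_measure_of) (metis (mono_tags) PowI mem_Collect_eq openin_subset subsetI)
  thus ?thesis by (simp add: topspace_weak topspace_product_topology)
qed

lemma meas_int_MFl:
  fixes f :: "'a::euclidean_space \<Rightarrow> real"
  assumes "bcont f" "i < l"
  shows "(\<lambda>Y. \<integral>x. f x \<partial>(Y i)) \<in> borel_measurable (MFl l)"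
  unfolding MFl_def
  apply (rule borel_of_measurable)
  using continuous_map_compose[OF continuous_map_product_projection[of i "{..<l}" "\<lambda>_. weak_topology"] cont_integral_weak[OF assms(1)]]
  using assms by (auto simp: o_def)



lemma MF_setD:
  assumes "N \<in> MF_set"
  shows "finite_measure N" "sets N = sets borel" "space N = UNIV"
  using assms unfolding MF_set_def by (auto dest: sets_eq_imp_space_eq)

lemma bcont_bound:
  assumes "bcont f" obtains B where "\<And>x. \<bar>f x\<bar> \<le> B" "B \<ge> 0"
proof -
  from assms obtain a where "\<forall>y\<in>range f. norm y \<le> a" unfolding bcont_def bounded_iff by blast
  thus ?thesis using that[of a] by (smt (verit) UNIV_I image_eqI real_norm_def)
qed

lemma bcont_meas:
  fixes f :: "'a::euclidean_space \<Rightarrow> real"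
  assumes "bcont f" "N \<in> MF_set"
  shows "f \<in> borel_measurable N"
  using borel_measurable_continuous_onI[of f] assms
  by (metis MF_setD(2) bcont_def measurable_cong_sets)

lemma bcont_int:
  fixes f :: "'a::euclidean_space \<Rightarrow> real"
  assumes "bcont f" "N \<in> MF_set"
  shows "integrable N f"
proof -
  obtain B where B: "\<And>x. \<bar>f x\<bar> \<le> B" using bcont_bound[OF assms(1)] by blast
  interpret finite_measure N using MF_setD[OF assms(2)] by simp
  show ?thesis by (rule integrable_const_bound[where B=B]) (auto simp: B bcont_meas[OF assms])
qed

lemma bcont_int_bound:
  fixes f :: "'a::euclidean_space \<Rightarrow> real"
  assumes "bcont f" "N \<in> MF_set" "\<And>x. \<bar>f x\<bar> \<le> B"
  shows "\<bar>\<integral>x. f x \<partial>N\<bar> \<le> B * measure N UNIV"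
proof -
  interpret finite_measure N using MF_setD[OF assms(2)] by simp
  have "\<bar>\<integral>x. f x \<partial>N\<bar> \<le> (\<integral>x. \<bar>f x\<bar> \<partial>N)" by (rule integral_abs_bound)
  also have "\<dots> \<le> (\<integral>x. B \<partial>N)"
    by (rule integral_mono) (auto intro: bcont_int[OF assms(1,2)] assms(3))
  also have "\<dots> = B * measure N UNIV" using MF_setD[OF assms(2)] by simp
  finally show ?thesis .
qed

definition cbc :: "('a::euclidean_space \<Rightarrow> complex) \<Rightarrow> bool" where
  "cbc f \<longleftrightarrow> continuous_on UNIV f \<and> bounded (range f)"

lemma cbc_Re: "cbc f \<Longrightarrow> bcont (\<lambda>x. Re (f x))"
proof -
  assume a: "cbc f"
  then obtain B where B: "\<And>x. cmod (f x) \<le> B" unfolding cbc_def bounded_iff by blast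
  have "\<And>x. norm (Re (f x)) \<le> B" using B abs_Re_le_cmod order_trans by (simp) blast
  hence "bounded (range (\<lambda>x. Re (f x)))" unfolding bounded_iff by blast
  moreover have "continuous_on UNIV (\<lambda>x. Re (f x))" using a unfolding cbc_def by (intro continuous_intros) auto
  ultimately show ?thesis unfolding bcont_def by simp
qed

lemma cbc_Im: "cbc f \<Longrightarrow> bcont (\<lambda>x. Im (f x))"
proof -
  assume a: "cbc f"
  then obtain B where B: "\<And>x. cmod (f x) \<le> B" unfolding cbc_def bounded_iff by blast
  have "\<And>x. norm (Im (f x)) \<le> B" using B abs_Im_le_cmod order_trans by (simp) blast
  hence "bounded (range (\<lambda>x. Im (f x)))" unfolding bounded_iff by blast
  moreover have "continuous_on UNIV (\<lambda>x. Im (f x))" using a unfolding cbc_def by (intro continuous_intros) auto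
  ultimately show ?thesis unfolding bcont_def by simp
qed

lemma cbc_of_real: "bcont f \<Longrightarrow> cbc (\<lambda>x. complex_of_real (f x))"
proof -
  assume a: "bcont f"
  then obtain B where B: "\<And>x. norm (f x) \<le> B" unfolding bcont_def bounded_iff by blast
  hence "bounded (range (\<lambda>x. complex_of_real (f x)))" unfolding bounded_iff by auto
  moreover have "continuous_on UNIV (\<lambda>x. complex_of_real (f x))" using a unfolding bcont_def by (intro continuous_intros) auto
  ultimately show ?thesis unfolding cbc_def by simp
qed

lemma cbc_int:
  fixes f :: "'a::euclidean_space \<Rightarrow> complex"
  assumes "cbc f" "N \<in> MF_set"
  shows "integrable N f"
    "(\<integral>x. f x \<partial>N) = complex_of_real (\<integral>x. Re (f x) \<partial>N) + \<i> * complex_of_real (\<integral>x. Im (f x) \<partial>N)"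
proof -
  have i1: "integrable N (\<lambda>x. complex_of_real (Re (f x)))" using bcont_int[OF cbc_Re[OF assms(1)] assms(2)] by simp
  have i2: "integrable N (\<lambda>x. \<i> * complex_of_real (Im (f x)))" using bcont_int[OF cbc_Im[OF assms(1)] assms(2)] by simp
  have e: "f = (\<lambda>x. complex_of_real (Re (f x)) + \<i> * complex_of_real (Im (f x)))" by (simp add: fun_eq_iff complex_eq_iff)
  show "integrable N f" by (subst e) (rule Bochner_Integration.integrable_add[OF i1 i2])
  show "(\<integral>x. f x \<partial>N) = complex_of_real (\<integral>x. Re (f x) \<partial>N) + \<i> * complex_of_real (\<integral>x. Im (f x) \<partial>N)"
    by (subst e, subst Bochner_Integration.integral_add[OF i1 i2]) simp
qed

lemma meas_cint_MFl:
  fixes f :: "'a::euclidean_space \<Rightarrow> complex"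
  assumes "cbc f" "i < l"
  shows "(\<lambda>Y. \<integral>x. f x \<partial>(Y i)) \<in> borel_measurable (MFl l)"
proof -
  have "(\<lambda>Y. complex_of_real (\<integral>x. Re (f x) \<partial>(Y i)) + \<i> * complex_of_real (\<integral>x. Im (f x) \<partial>(Y i))) \<in> borel_measurable (MFl l)"
    using meas_int_MFl[OF cbc_Re[OF assms(1)] assms(2)] meas_int_MFl[OF cbc_Im[OF assms(1)] assms(2)]
    by measurable
  then show ?thesis
  proof (rule measurable_cong[THEN iffD1, rotated])
    fix Y assume "Y \<in> space (MFl l :: (nat \<Rightarrow> 'a measure) measure)"
    hence "Y i \<in> MF_set" using assms by (auto simp: space_MFl)
    thus "complex_of_real (\<integral>x. Re (f x) \<partial>(Y i)) + \<i> * complex_of_real (\<integral>x. Im (f x) \<partial>(Y i)) = (\<integral>x. f x \<partial>(Y i))"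
      by (rule cbc_int(2)[OF assms(1), symmetric])
  qed
qed



definition apx :: "'a::euclidean_space set \<Rightarrow> nat \<Rightarrow> 'a \<Rightarrow> real" where
  "apx U n x = min 1 (real n * infdist x (- U))"

lemma apx_bcont: "bcont (apx U n)"
proof -
  have "\<And>x. norm (apx U n x) \<le> 1" unfolding apx_def by (auto simp: infdist_nonneg)
  hence "bounded (range (apx U n))" unfolding bounded_iff by blast
  moreover have "continuous_on UNIV (apx U n)" unfolding apx_def by (intro continuous_intros)
  ultimately show ?thesis unfolding bcont_def by simp
qed

lemma apx_lim:
  assumes "open U" "U \<noteq> UNIV"
  shows "(\<lambda>n. apx U n x) \<longlonglongrightarrow> indicator U x"
proof (cases "x \<in> U")
  case True
  have d: "infdist x (- U) > 0"
    by (rule infdist_pos_not_in_closed) (use assms True in auto)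
  obtain k :: nat where k: "1 / infdist x (- U) < k" using reals_Archimedean2 by blast
  have "eventually (\<lambda>n. apx U n x = 1) sequentially"
    unfolding eventually_sequentially
  proof (intro exI allI impI)
    fix n assume "k \<le> n"
    hence "1 < real n * infdist x (- U)" using k d
      by (smt (verit, best) divide_less_eq mult.commute of_nat_mono)
    thus "apx U n x = 1" unfolding apx_def by simp
  qed
  hence "(\<lambda>n. apx U n x) \<longlonglongrightarrow> 1" by (rule tendsto_eventually)
  thus ?thesis using True by simp
next
  case False
  then show ?thesis unfolding apx_def by simp
qed

lemma apx_int_lim:
  assumes "open U" "U \<noteq> UNIV" "N \<in> MF_set"
  shows "(\<lambda>n. \<integral>x. apx U n x \<partial>N) \<longlonglongrightarrow> measure N U"
proof -
  interpret finite_measure N using MF_setD[OF assms(3)] by simp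
  have "(\<lambda>n. \<integral>x. apx U n x \<partial>N) \<longlonglongrightarrow> (\<integral>x. indicator U x \<partial>N)"
  proof (rule integral_dominated_convergence[where w="\<lambda>_. 1"])
    show "indicator U \<in> borel_measurable N"
      by (rule borel_measurable_indicator) (simp add: MF_setD(2)[OF assms(3)] assms(1))
    show "\<And>n. apx U n \<in> borel_measurable N" by (rule bcont_meas[OF apx_bcont assms(3)])
    show "integrable N (\<lambda>_. 1::real)" by simp
    show "AE x in N. (\<lambda>n. apx U n x) \<longlonglongrightarrow> indicator U x" using apx_lim[OF assms(1,2)] by simp
    show "\<And>n. AE x in N. norm (apx U n x) \<le> 1" unfolding apx_def by (auto simp: infdist_nonneg)
  qed
  thus ?thesis using MF_setD[OF assms(3)] by simp
qed

lemma meas_measure_open: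
  assumes "open U" "i < l"
  shows "(\<lambda>Y. measure (Y i :: 'a::euclidean_space measure) U) \<in> borel_measurable (MFl l)"
proof (cases "U = UNIV")
  case True
  have b: "bcont (\<lambda>_::'a. 1::real)" unfolding bcont_def by auto
  have "(\<lambda>Y. measure (Y i :: 'a measure) (space (Y i))) \<in> borel_measurable (MFl l)"
    using meas_int_MFl[OF b assms(2)] by simp
  then show ?thesis
  proof (rule measurable_cong[THEN iffD1, rotated])
    fix Y assume "Y \<in> space (MFl l :: (nat \<Rightarrow> 'a measure) measure)"
    hence "Y i \<in> MF_set" using assms by (auto simp: space_MFl)
    thus "measure (Y i) (space (Y i)) = measure (Y i) U" using True MF_setD(3)[of "Y i"] by simp
  qed
next
  case False
  show ?thesis
  proof (rule borel_measurable_LIMSEQ_real)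
    fix Y assume "Y \<in> space (MFl l :: (nat \<Rightarrow> 'a measure) measure)"
    hence "Y i \<in> MF_set" using assms by (auto simp: space_MFl)
    thus "(\<lambda>n. \<integral>x. apx U n x \<partial>(Y i)) \<longlonglongrightarrow> measure (Y i) U"
      by (rule apx_int_lim[OF assms(1) False])
  next
    fix n show "(\<lambda>Y. \<integral>x. apx U n x \<partial>(Y i :: 'a measure)) \<in> borel_measurable (MFl l)"
      by (rule meas_int_MFl[OF apx_bcont assms(2)])
  qed
qed

lemma meas_emeasure:
  assumes "A \<in> sets borel" "i < l"
  shows "(\<lambda>Y. emeasure (Y i :: 'a::euclidean_space measure) A) \<in> borel_measurable (MFl l)"
proof -
  have "Int_stable {S::'a set. open S}" by (auto simp: Int_stable_def)
  moreover have "{S::'a set. open S} \<subseteq> Pow UNIV" by simp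
  moreover have "A \<in> sigma_sets UNIV {S. open S}" using assms(1) by (simp add: sets_borel)
  ultimately show ?thesis
  proof (induction rule: sigma_sets_induct_disjoint)
    case (basic A)
    have "open A" using basic by simp
    have "(\<lambda>Y. ennreal (measure (Y i :: 'a measure) A)) \<in> borel_measurable (MFl l)"
      using meas_measure_open[OF \<open>open A\<close> assms(2)] by measurable
    then show ?case
      by (rule measurable_cong[THEN iffD1, rotated])
         (use assms in \<open>auto simp: space_MFl dest!: MF_setD(1) intro: finite_measure.emeasure_eq_measure[symmetric]\<close>)
  next
    case empty then show ?case by simp
  next
    case (compl A)
    have "(\<lambda>Y. emeasure (Y i :: 'a measure) UNIV - emeasure (Y i) A) \<in> borel_measurable (MFl l)"
    proof -
      have "(\<lambda>Y. emeasure (Y i :: 'a measure) UNIV) \<in> borel_measurable (MFl l)"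
        using meas_measure_open[of UNIV i l] assms(2)
        by (rule_tac measurable_cong[THEN iffD1, rotated, of "\<lambda>Y. ennreal (measure (Y i) UNIV)"])
           (auto simp: space_MFl dest!: MF_setD(1) intro: finite_measure.emeasure_eq_measure[symmetric])
      with compl show ?thesis by simp
    qed
    then show ?case
    proof (rule measurable_cong[THEN iffD1, rotated])
      fix Y assume "Y \<in> space (MFl l :: (nat \<Rightarrow> 'a measure) measure)"
      hence Y: "Y i \<in> MF_set" using assms by (auto simp: space_MFl)
      interpret finite_measure "Y i" using MF_setD[OF Y] by simp
      have "A \<in> sets (Y i)" using compl(1) MF_setD[OF Y] by (simp add: sets_borel)
      thus "emeasure (Y i) UNIV - emeasure (Y i) A = emeasure (Y i) (UNIV - A)"
        using MF_setD[OF Y] by (intro emeasure_Diff[symmetric]) auto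
    qed
  next
    case (union F)
    have "(\<lambda>Y. \<Sum>n. emeasure (Y i :: 'a measure) (F n)) \<in> borel_measurable (MFl l)"
      using union by measurable
    then show ?case
    proof (rule measurable_cong[THEN iffD1, rotated])
      fix Y assume "Y \<in> space (MFl l :: (nat \<Rightarrow> 'a measure) measure)"
      hence Y: "Y i \<in> MF_set" using assms by (auto simp: space_MFl)
      have "range F \<subseteq> sets (Y i)" using union(2) MF_setD[OF Y] by (simp add: sets_borel)
      thus "(\<Sum>n. emeasure (Y i) (F n)) = emeasure (Y i) (\<Union>n. F n)"
        using union(1) by (intro suminf_emeasure) auto
    qed
  qed
qed



lemma space_MFl_D:
  assumes "sets M = sets (MFl l)" "Y \<in> space M" "i < l"
  shows "(Y i :: 'a::euclidean_space measure) \<in> MF_set"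
proof -
  have "space M = space (MFl l :: (nat \<Rightarrow> 'a measure) measure)" by (rule sets_eq_imp_space_eq[OF assms(1)])
  thus ?thesis using assms by (auto simp: space_MFl)
qed

lemma meas_Y:
  assumes "N \<in> MF_set" "g \<in> borel_measurable borel"
  shows "g \<in> borel_measurable N"
  using assms MF_setD(2)[OF assms(1)] by (simp cong: measurable_cong_sets)

definition mix :: "(nat \<Rightarrow> 'a::euclidean_space measure) measure \<Rightarrow> ((nat \<Rightarrow> 'a measure) \<Rightarrow> ennreal)
   \<Rightarrow> (nat \<Rightarrow> 'a measure) measure \<Rightarrow> ((nat \<Rightarrow> 'a measure) \<Rightarrow> ennreal) \<Rightarrow> nat \<Rightarrow> 'a measure" where
  "mix M w M' w' i = measure_of UNIV (sets borel)
     (\<lambda>A. (\<integral>\<^sup>+Y. w Y * emeasure (Y i) A \<partial>M) + (\<integral>\<^sup>+Y. w' Y * emeasure (Y i) A \<partial>M'))"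

lemma sets_mix[simp]: "sets (mix M w M' w' i) = sets borel"
  unfolding mix_def using sets.sigma_sets_eq[of borel] by (simp add: sets_measure_of_conv)

lemma space_mix[simp]: "space (mix M w M' w' i) = UNIV"
  using sets_eq_imp_space_eq[OF sets_mix] by simp

lemma meas_emeasure':
  assumes "sets M = sets (MFl l)" "i < l" "A \<in> sets borel"
  shows "(\<lambda>Y. emeasure (Y i :: 'a::euclidean_space measure) A) \<in> borel_measurable M"
  using meas_emeasure[OF assms(3,2)] assms(1) by (simp cong: measurable_cong_sets)

lemma T_ca:
  assumes sM: "sets M = sets (MFl l)" and i: "i < l" and w: "w \<in> borel_measurable M"
    and A: "range A \<subseteq> sets borel" "disjoint_family A"
  shows "(\<Sum>n. \<integral>\<^sup>+Y. w Y * emeasure (Y i :: 'a::euclidean_space measure) (A n) \<partial>M)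
       = (\<integral>\<^sup>+Y. w Y * emeasure (Y i) (\<Union>n. A n) \<partial>M)"
proof -
  have "(\<Sum>n. \<integral>\<^sup>+Y. w Y * emeasure (Y i :: 'a measure) (A n) \<partial>M)
      = (\<integral>\<^sup>+Y. (\<Sum>n. w Y * emeasure (Y i) (A n)) \<partial>M)"
    using meas_emeasure'[OF sM i] A w by (intro nn_integral_suminf[symmetric]) auto
  also have "\<dots> = (\<integral>\<^sup>+Y. w Y * emeasure (Y i) (\<Union>n. A n) \<partial>M)"
  proof (rule nn_integral_cong)
    fix Y assume "Y \<in> space M"
    hence Y: "Y i \<in> MF_set" by (rule space_MFl_D[OF sM _ i])
    have "range A \<subseteq> sets (Y i)" using A MF_setD(2)[OF Y] by simp
    hence "(\<Sum>n. emeasure (Y i) (A n)) = emeasure (Y i) (\<Union>n. A n)"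
      using A by (intro suminf_emeasure) auto
    thus "(\<Sum>n. w Y * emeasure (Y i) (A n)) = w Y * emeasure (Y i) (\<Union>n. A n)" by simp
  qed
  finally show ?thesis .
qed

lemma emeasure_mix:
  assumes sM: "sets M = sets (MFl l)" and sM': "sets M' = sets (MFl l)" and i: "i < l"
    and w: "w \<in> borel_measurable M" and w': "w' \<in> borel_measurable M'"
    and A: "A \<in> sets borel"
  shows "emeasure (mix M w M' w' i) A = (\<integral>\<^sup>+Y. w Y * emeasure (Y i :: 'a::euclidean_space measure) A \<partial>M) + (\<integral>\<^sup>+Y. w' Y * emeasure (Y i) A \<partial>M')"
  unfolding mix_def
proof (rule emeasure_measure_of_sigma[OF _ _ _ A])
  show "sigma_algebra UNIV (sets (borel :: 'a measure))"
    using sets.sigma_algebra_axioms[of "borel :: 'a measure"] by simp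
  show "positive (sets borel) (\<lambda>A. (\<integral>\<^sup>+Y. w Y * emeasure (Y i :: 'a measure) A \<partial>M) + (\<integral>\<^sup>+Y. w' Y * emeasure (Y i) A \<partial>M'))"
    unfolding positive_def by simp
  show "countably_additive (sets borel) (\<lambda>A. (\<integral>\<^sup>+Y. w Y * emeasure (Y i :: 'a measure) A \<partial>M) + (\<integral>\<^sup>+Y. w' Y * emeasure (Y i) A \<partial>M'))"
    unfolding countably_additive_def
  proof safe
    fix A :: "nat \<Rightarrow> 'a set" assume A: "range A \<subseteq> sets borel" "disjoint_family A"
    have "(\<Sum>n. (\<integral>\<^sup>+Y. w Y * emeasure (Y i) (A n) \<partial>M) + (\<integral>\<^sup>+Y. w' Y * emeasure (Y i) (A n) \<partial>M'))
        = (\<Sum>n. (\<integral>\<^sup>+Y. w Y * emeasure (Y i) (A n) \<partial>M)) + (\<Sum>n. (\<integral>\<^sup>+Y. w' Y * emeasure (Y i) (A n) \<partial>M'))"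
      by (rule suminf_add[symmetric]) auto
    also have "\<dots> = (\<integral>\<^sup>+Y. w Y * emeasure (Y i) (\<Union>n. A n) \<partial>M) + (\<integral>\<^sup>+Y. w' Y * emeasure (Y i) (\<Union>n. A n) \<partial>M')"
      using T_ca[OF sM i w A] T_ca[OF sM' i w' A] by simp
    finally show "(\<Sum>n. (\<integral>\<^sup>+Y. w Y * emeasure (Y i) (A n) \<partial>M) + (\<integral>\<^sup>+Y. w' Y * emeasure (Y i) (A n) \<partial>M'))
        = (\<integral>\<^sup>+Y. w Y * emeasure (Y i) (\<Union>n. A n) \<partial>M) + (\<integral>\<^sup>+Y. w' Y * emeasure (Y i) (\<Union>n. A n) \<partial>M')" .
  qed
qed

lemma inner_meas_cong:
  assumes sM: "sets M = sets (MFl l)" and i: "i < l"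
    and "f \<in> borel_measurable M"
    and "\<And>Y. Y \<in> space M \<Longrightarrow> (Y i :: 'a::euclidean_space measure) \<in> MF_set \<Longrightarrow> f Y = g Y"
  shows "g \<in> borel_measurable M"
  using assms(3)
proof (rule measurable_cong[THEN iffD1, rotated])
  fix Y assume "Y \<in> space M"
  thus "f Y = g Y" using assms(4) space_MFl_D[OF sM _ i] by blast
qed

lemma T_cmult:
  assumes "(\<lambda>Y. w Y * (\<integral>\<^sup>+x. u x \<partial>(Y i))) \<in> borel_measurable M"
    and "\<And>Y. Y \<in> space M \<Longrightarrow> (\<integral>\<^sup>+x. c * u x \<partial>(Y i)) = c * (\<integral>\<^sup>+x. u x \<partial>(Y i))"
  shows "(\<integral>\<^sup>+Y. w Y * (\<integral>\<^sup>+x. c * u x \<partial>(Y i)) \<partial>M) = c * (\<integral>\<^sup>+Y. w Y * (\<integral>\<^sup>+x. u x \<partial>(Y i)) \<partial>M)"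
proof -
  have "(\<integral>\<^sup>+Y. w Y * (\<integral>\<^sup>+x. c * u x \<partial>(Y i)) \<partial>M) = (\<integral>\<^sup>+Y. c * (w Y * (\<integral>\<^sup>+x. u x \<partial>(Y i))) \<partial>M)"
    using assms(2) by (intro nn_integral_cong) (simp add: ac_simps)
  also have "\<dots> = c * (\<integral>\<^sup>+Y. w Y * (\<integral>\<^sup>+x. u x \<partial>(Y i)) \<partial>M)"
    by (rule nn_integral_cmult[OF assms(1)])
  finally show ?thesis .
qed

lemma T_add:
  assumes "(\<lambda>Y. w Y * (\<integral>\<^sup>+x. u x \<partial>(Y i))) \<in> borel_measurable M"
    "(\<lambda>Y. w Y * (\<integral>\<^sup>+x. v x \<partial>(Y i))) \<in> borel_measurable M"
    and "\<And>Y. Y \<in> space M \<Longrightarrow> (\<integral>\<^sup>+x. v x + u x \<partial>(Y i)) = (\<integral>\<^sup>+x. v x \<partial>(Y i)) + (\<integral>\<^sup>+x. u x \<partial>(Y i))"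
  shows "(\<integral>\<^sup>+Y. w Y * (\<integral>\<^sup>+x. v x + u x \<partial>(Y i)) \<partial>M) = (\<integral>\<^sup>+Y. w Y * (\<integral>\<^sup>+x. v x \<partial>(Y i)) \<partial>M) + (\<integral>\<^sup>+Y. w Y * (\<integral>\<^sup>+x. u x \<partial>(Y i)) \<partial>M)"
proof -
  have "(\<integral>\<^sup>+Y. w Y * (\<integral>\<^sup>+x. v x + u x \<partial>(Y i)) \<partial>M) = (\<integral>\<^sup>+Y. w Y * (\<integral>\<^sup>+x. v x \<partial>(Y i)) + w Y * (\<integral>\<^sup>+x. u x \<partial>(Y i)) \<partial>M)"
    using assms(3) by (intro nn_integral_cong) (simp add: distrib_left)
  also have "\<dots> = (\<integral>\<^sup>+Y. w Y * (\<integral>\<^sup>+x. v x \<partial>(Y i)) \<partial>M) + (\<integral>\<^sup>+Y. w Y * (\<integral>\<^sup>+x. u x \<partial>(Y i)) \<partial>M)"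
    by (rule nn_integral_add[OF assms(2,1)])
  finally show ?thesis .
qed

lemma T_SUP:
  fixes U :: "nat \<Rightarrow> 'a \<Rightarrow> ennreal"
  assumes "\<And>n. (\<lambda>Y. w Y * (\<integral>\<^sup>+x. U n x \<partial>(Y i))) \<in> borel_measurable M"
    and inc: "\<And>Y. Y \<in> space M \<Longrightarrow> incseq (\<lambda>n. \<integral>\<^sup>+x. U n x \<partial>(Y i))"
    and "\<And>Y. Y \<in> space M \<Longrightarrow> (\<integral>\<^sup>+x. (SUP n. U n) x \<partial>(Y i)) = (SUP n. \<integral>\<^sup>+x. U n x \<partial>(Y i))"
  shows "(\<integral>\<^sup>+Y. w Y * (\<integral>\<^sup>+x. (SUP n. U n) x \<partial>(Y i)) \<partial>M) = (SUP n. \<integral>\<^sup>+Y. w Y * (\<integral>\<^sup>+x. U n x \<partial>(Y i)) \<partial>M)"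
proof -
  have "(\<integral>\<^sup>+Y. w Y * (\<integral>\<^sup>+x. (SUP n. U n) x \<partial>(Y i)) \<partial>M) = (\<integral>\<^sup>+Y. (SUP n. w Y * (\<integral>\<^sup>+x. U n x \<partial>(Y i))) \<partial>M)"
    using assms(3) by (intro nn_integral_cong) (simp add: SUP_mult_left_ennreal)
  also have "\<dots> = (SUP n. \<integral>\<^sup>+Y. w Y * (\<integral>\<^sup>+x. U n x \<partial>(Y i)) \<partial>M)"
  proof (rule nn_integral_monotone_convergence_SUP_AE)
    fix n
    show "AE Y in M. w Y * (\<integral>\<^sup>+x. U n x \<partial>(Y i)) \<le> w Y * (\<integral>\<^sup>+x. U (Suc n) x \<partial>(Y i))"
      using inc by (auto intro!: mult_left_mono AE_I2 simp: incseq_Suc_iff)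
  qed (use assms(1) in auto)
  finally show ?thesis .
qed

lemma nn_mix:
  fixes g :: "'a::euclidean_space \<Rightarrow> ennreal"
  assumes sM: "sets M = sets (MFl l)" and sM': "sets M' = sets (MFl l)" and i: "i < l"
    and w: "w \<in> borel_measurable M" and w': "w' \<in> borel_measurable M'"
    and g: "g \<in> borel_measurable borel"
  shows "(\<lambda>Y. \<integral>\<^sup>+x. g x \<partial>(Y i)) \<in> borel_measurable M \<and> (\<lambda>Y. \<integral>\<^sup>+x. g x \<partial>(Y i)) \<in> borel_measurable M'
    \<and> (\<integral>\<^sup>+x. g x \<partial>mix M w M' w' i) = (\<integral>\<^sup>+Y. w Y * (\<integral>\<^sup>+x. g x \<partial>(Y i)) \<partial>M) + (\<integral>\<^sup>+Y. w' Y * (\<integral>\<^sup>+x. g x \<partial>(Y i)) \<partial>M')"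
  using g
proof (induction rule: borel_measurable_induct)
  case (cong f g)
  have "f = g" using cong(3) by auto
  then show ?case using cong(4) by simp
next
  case (set A)
  have ind: "(\<integral>\<^sup>+x. indicator A x \<partial>N) = emeasure N A" if "N \<in> MF_set" for N :: "'a measure"
    using set MF_setD(2)[OF that] by (intro nn_integral_indicator) simp
  have m1: "(\<lambda>Y. \<integral>\<^sup>+x. indicator A x \<partial>(Y i)) \<in> borel_measurable M"
    by (rule inner_meas_cong[OF sM i meas_emeasure'[OF sM i set]]) (simp add: ind)
  have m2: "(\<lambda>Y. \<integral>\<^sup>+x. indicator A x \<partial>(Y i)) \<in> borel_measurable M'"
    by (rule inner_meas_cong[OF sM' i meas_emeasure'[OF sM' i set]]) (simp add: ind)
  have "(\<integral>\<^sup>+x. indicator A x \<partial>mix M w M' w' i) = emeasure (mix M w M' w' i) A"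
    using set by (intro nn_integral_indicator) simp
  also have "\<dots> = (\<integral>\<^sup>+Y. w Y * emeasure (Y i) A \<partial>M) + (\<integral>\<^sup>+Y. w' Y * emeasure (Y i) A \<partial>M')"
    by (rule emeasure_mix[OF sM sM' i w w' set])
  also have "\<dots> = (\<integral>\<^sup>+Y. w Y * (\<integral>\<^sup>+x. indicator A x \<partial>(Y i)) \<partial>M) + (\<integral>\<^sup>+Y. w' Y * (\<integral>\<^sup>+x. indicator A x \<partial>(Y i)) \<partial>M')"
    using space_MFl_D[OF sM _ i] space_MFl_D[OF sM' _ i] ind
    by (intro arg_cong2[where f="(+)"] nn_integral_cong) auto
  finally show ?case using m1 m2 by simp
next
  case (mult u c)
  have um: "u \<in> borel_measurable N" if "N \<in> MF_set" for N :: "'a measure"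
    by (rule meas_Y[OF that mult(2)])
  have cm: "(\<integral>\<^sup>+x. c * u x \<partial>N) = c * (\<integral>\<^sup>+x. u x \<partial>N)" if "N \<in> MF_set" for N :: "'a measure"
    by (rule nn_integral_cmult[OF um[OF that]])
  have m1: "(\<lambda>Y. \<integral>\<^sup>+x. c * u x \<partial>(Y i)) \<in> borel_measurable M"
    by (rule inner_meas_cong[OF sM i, where f="\<lambda>Y. c * (\<integral>\<^sup>+x. u x \<partial>(Y i))"]) (use mult(4) cm in auto)
  have m2: "(\<lambda>Y. \<integral>\<^sup>+x. c * u x \<partial>(Y i)) \<in> borel_measurable M'"
    by (rule inner_meas_cong[OF sM' i, where f="\<lambda>Y. c * (\<integral>\<^sup>+x. u x \<partial>(Y i))"]) (use mult(4) cm in auto)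
  have "(\<integral>\<^sup>+x. c * u x \<partial>mix M w M' w' i) = c * (\<integral>\<^sup>+x. u x \<partial>mix M w M' w' i)"
    using mult(2) by (intro nn_integral_cmult) (simp cong: measurable_cong_sets)
  also have "\<dots> = c * (\<integral>\<^sup>+Y. w Y * (\<integral>\<^sup>+x. u x \<partial>(Y i)) \<partial>M) + c * (\<integral>\<^sup>+Y. w' Y * (\<integral>\<^sup>+x. u x \<partial>(Y i)) \<partial>M')"
    using mult(4) by (simp add: distrib_left)
  also have "\<dots> = (\<integral>\<^sup>+Y. w Y * (\<integral>\<^sup>+x. c * u x \<partial>(Y i)) \<partial>M) + (\<integral>\<^sup>+Y. w' Y * (\<integral>\<^sup>+x. c * u x \<partial>(Y i)) \<partial>M')"
    using mult(4) w w' cm space_MFl_D[OF sM _ i] space_MFl_D[OF sM' _ i]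
    by (subst (1 2) T_cmult) auto
  finally show ?case using m1 m2 by simp
next
  case (add u v)
  have umeas: "u \<in> borel_measurable borel" and vmeas: "v \<in> borel_measurable borel" using add by blast+
  have Pu: "(\<lambda>Y. \<integral>\<^sup>+x. u x \<partial>(Y i)) \<in> borel_measurable M \<and> (\<lambda>Y. \<integral>\<^sup>+x. u x \<partial>(Y i)) \<in> borel_measurable M'
    \<and> (\<integral>\<^sup>+x. u x \<partial>mix M w M' w' i) = (\<integral>\<^sup>+Y. w Y * (\<integral>\<^sup>+x. u x \<partial>(Y i)) \<partial>M) + (\<integral>\<^sup>+Y. w' Y * (\<integral>\<^sup>+x. u x \<partial>(Y i)) \<partial>M')"
    using add by blast
  have Pv: "(\<lambda>Y. \<integral>\<^sup>+x. v x \<partial>(Y i)) \<in> borel_measurable M \<and> (\<lambda>Y. \<integral>\<^sup>+x. v x \<partial>(Y i)) \<in> borel_measurable M'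
    \<and> (\<integral>\<^sup>+x. v x \<partial>mix M w M' w' i) = (\<integral>\<^sup>+Y. w Y * (\<integral>\<^sup>+x. v x \<partial>(Y i)) \<partial>M) + (\<integral>\<^sup>+Y. w' Y * (\<integral>\<^sup>+x. v x \<partial>(Y i)) \<partial>M')"
    using add by blast
  have ad: "(\<integral>\<^sup>+x. v x + u x \<partial>N) = (\<integral>\<^sup>+x. v x \<partial>N) + (\<integral>\<^sup>+x. u x \<partial>N)" if "N \<in> MF_set" for N :: "'a measure"
    by (rule nn_integral_add[OF meas_Y[OF that vmeas] meas_Y[OF that umeas]])
  have m1: "(\<lambda>Y. \<integral>\<^sup>+x. v x + u x \<partial>(Y i)) \<in> borel_measurable M"
    by (rule inner_meas_cong[OF sM i, where f="\<lambda>Y. (\<integral>\<^sup>+x. v x \<partial>(Y i)) + (\<integral>\<^sup>+x. u x \<partial>(Y i))"]) (use Pu Pv ad in auto)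
  have m2: "(\<lambda>Y. \<integral>\<^sup>+x. v x + u x \<partial>(Y i)) \<in> borel_measurable M'"
    by (rule inner_meas_cong[OF sM' i, where f="\<lambda>Y. (\<integral>\<^sup>+x. v x \<partial>(Y i)) + (\<integral>\<^sup>+x. u x \<partial>(Y i))"]) (use Pu Pv ad in auto)
  have "(\<integral>\<^sup>+x. v x + u x \<partial>mix M w M' w' i) = (\<integral>\<^sup>+x. v x \<partial>mix M w M' w' i) + (\<integral>\<^sup>+x. u x \<partial>mix M w M' w' i)"
    using umeas vmeas by (intro nn_integral_add) (simp_all cong: measurable_cong_sets)
  also have "\<dots> = (\<integral>\<^sup>+Y. w Y * (\<integral>\<^sup>+x. v x \<partial>(Y i)) \<partial>M) + (\<integral>\<^sup>+Y. w Y * (\<integral>\<^sup>+x. u x \<partial>(Y i)) \<partial>M)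
     + ((\<integral>\<^sup>+Y. w' Y * (\<integral>\<^sup>+x. v x \<partial>(Y i)) \<partial>M') + (\<integral>\<^sup>+Y. w' Y * (\<integral>\<^sup>+x. u x \<partial>(Y i)) \<partial>M'))"
    using Pu Pv by (simp add: ac_simps)
  also have "\<dots> = (\<integral>\<^sup>+Y. w Y * (\<integral>\<^sup>+x. v x + u x \<partial>(Y i)) \<partial>M) + (\<integral>\<^sup>+Y. w' Y * (\<integral>\<^sup>+x. v x + u x \<partial>(Y i)) \<partial>M')"
    using Pu Pv w w' ad space_MFl_D[OF sM _ i] space_MFl_D[OF sM' _ i]
    by (subst (1 2) T_add) auto
  finally show ?case using m1 m2 by simp
next
  case (seq U)
  have Umeas: "\<And>n. U n \<in> borel_measurable borel" and inc: "incseq U" using seq by blast+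
  have PU: "\<And>n. (\<lambda>Y. \<integral>\<^sup>+x. U n x \<partial>(Y i)) \<in> borel_measurable M \<and> (\<lambda>Y. \<integral>\<^sup>+x. U n x \<partial>(Y i)) \<in> borel_measurable M'
    \<and> (\<integral>\<^sup>+x. U n x \<partial>mix M w M' w' i) = (\<integral>\<^sup>+Y. w Y * (\<integral>\<^sup>+x. U n x \<partial>(Y i)) \<partial>M) + (\<integral>\<^sup>+Y. w' Y * (\<integral>\<^sup>+x. U n x \<partial>(Y i)) \<partial>M')"
    using seq by blast
  have incY: "incseq (\<lambda>n. \<integral>\<^sup>+x. U n x \<partial>(Y i))" for Y :: "nat \<Rightarrow> 'a measure"
    using inc by (auto simp: incseq_def le_fun_def intro!: nn_integral_mono)
  have sp: "(\<integral>\<^sup>+x. (SUP n. U n) x \<partial>N) = (SUP n. \<integral>\<^sup>+x. U n x \<partial>N)" if "N \<in> MF_set" for N :: "'a measure"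
    unfolding SUP_apply using inc meas_Y[OF that Umeas]
    by (intro nn_integral_monotone_convergence_SUP) auto
  have m1: "(\<lambda>Y. \<integral>\<^sup>+x. (SUP n. U n) x \<partial>(Y i)) \<in> borel_measurable M"
    by (rule inner_meas_cong[OF sM i, where f="\<lambda>Y. (SUP n. \<integral>\<^sup>+x. U n x \<partial>(Y i))"]) (use PU sp in \<open>auto intro!: borel_measurable_SUP\<close>)
  have m2: "(\<lambda>Y. \<integral>\<^sup>+x. (SUP n. U n) x \<partial>(Y i)) \<in> borel_measurable M'"
    by (rule inner_meas_cong[OF sM' i, where f="\<lambda>Y. (SUP n. \<integral>\<^sup>+x. U n x \<partial>(Y i))"]) (use PU sp in \<open>auto intro!: borel_measurable_SUP\<close>)
  have incT: "incseq (\<lambda>n. \<integral>\<^sup>+Y. ww Y * (\<integral>\<^sup>+x. U n x \<partial>(Y i)) \<partial>MM)" for ww MM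
    unfolding incseq_def
  proof (intro allI impI)
    fix m n :: nat assume "m \<le> n"
    show "(\<integral>\<^sup>+Y. ww Y * (\<integral>\<^sup>+x. U m x \<partial>(Y i)) \<partial>MM) \<le> (\<integral>\<^sup>+Y. ww Y * (\<integral>\<^sup>+x. U n x \<partial>(Y i)) \<partial>MM)"
      by (rule nn_integral_mono) (use incY[unfolded incseq_def] \<open>m \<le> n\<close> in \<open>auto intro: mult_left_mono\<close>)
  qed
  have "(\<integral>\<^sup>+x. (SUP n. U n) x \<partial>mix M w M' w' i) = (SUP n. \<integral>\<^sup>+x. U n x \<partial>mix M w M' w' i)"
    unfolding SUP_apply using inc Umeas
    by (intro nn_integral_monotone_convergence_SUP) (simp_all cong: measurable_cong_sets)
  also have "\<dots> = (SUP n. (\<integral>\<^sup>+Y. w Y * (\<integral>\<^sup>+x. U n x \<partial>(Y i)) \<partial>M) + (\<integral>\<^sup>+Y. w' Y * (\<integral>\<^sup>+x. U n x \<partial>(Y i)) \<partial>M'))"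
    using PU by simp
  also have "\<dots> = (SUP n. \<integral>\<^sup>+Y. w Y * (\<integral>\<^sup>+x. U n x \<partial>(Y i)) \<partial>M) + (SUP n. \<integral>\<^sup>+Y. w' Y * (\<integral>\<^sup>+x. U n x \<partial>(Y i)) \<partial>M')"
    by (rule ennreal_SUP_add[OF incT incT])
  also have "\<dots> = (\<integral>\<^sup>+Y. w Y * (\<integral>\<^sup>+x. (SUP n. U n) x \<partial>(Y i)) \<partial>M) + (\<integral>\<^sup>+Y. w' Y * (\<integral>\<^sup>+x. (SUP n. U n) x \<partial>(Y i)) \<partial>M')"
  proof -
    have mw: "(\<lambda>Y. ww Y * (\<integral>\<^sup>+x. U n x \<partial>(Y i))) \<in> borel_measurable MM"
      if "ww \<in> borel_measurable MM" "(\<lambda>Y. \<integral>\<^sup>+x. U n x \<partial>(Y i)) \<in> borel_measurable MM" for ww MM n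
      using that by (intro borel_measurable_times_ennreal) auto
    have e1: "(\<integral>\<^sup>+Y. w Y * (\<integral>\<^sup>+x. (SUP n. U n) x \<partial>(Y i)) \<partial>M) = (SUP n. \<integral>\<^sup>+Y. w Y * (\<integral>\<^sup>+x. U n x \<partial>(Y i)) \<partial>M)"
      by (rule T_SUP) (use PU sp space_MFl_D[OF sM _ i] incY mw[OF w] in auto)
    have e2: "(\<integral>\<^sup>+Y. w' Y * (\<integral>\<^sup>+x. (SUP n. U n) x \<partial>(Y i)) \<partial>M') = (SUP n. \<integral>\<^sup>+Y. w' Y * (\<integral>\<^sup>+x. U n x \<partial>(Y i)) \<partial>M')"
      by (rule T_SUP) (use PU sp space_MFl_D[OF sM' _ i] incY mw[OF w'] in auto)
    show ?thesis using e1 e2 by simp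
  qed
  finally show ?case using m1 m2 by simp
qed



lemma meas_int_M:
  fixes g :: "'a::euclidean_space \<Rightarrow> real"
  assumes "sets M = sets (MFl l)" "bcont g" "i < l"
  shows "(\<lambda>Y. \<integral>x. g x \<partial>(Y i)) \<in> borel_measurable M"
  using meas_int_MFl[OF assms(2,3)] assms(1) by (simp cong: measurable_cong_sets)

definition Tm :: "(nat \<Rightarrow> 'a::euclidean_space measure) measure \<Rightarrow> ((nat \<Rightarrow> 'a measure) \<Rightarrow> real) \<Rightarrow> nat \<Rightarrow> ('a \<Rightarrow> real) \<Rightarrow> real" where
  "Tm M r i g = (\<integral>Y. r Y * (\<integral>x. g x \<partial>(Y i)) \<partial>M)"

lemma int_weight:
  fixes g :: "'a::euclidean_space \<Rightarrow> real"
  assumes sM: "sets M = sets (MFl l)" and i: "i < l" and g: "bcont g"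
    and s: "s \<in> borel_measurable M" and s': "integrable M (\<lambda>Y. s' Y * measure (Y i :: 'a measure) UNIV)"
    and le: "\<And>Y. Y \<in> space M \<Longrightarrow> \<bar>s Y\<bar> \<le> s' Y"
  shows "integrable M (\<lambda>Y. s Y * (\<integral>x. g x \<partial>(Y i)))"
proof -
  obtain B where B: "\<And>x. \<bar>g x\<bar> \<le> B" "B \<ge> 0" using bcont_bound[OF g] by blast
  show ?thesis
  proof (rule Bochner_Integration.integrable_bound)
    show "integrable M (\<lambda>Y. B * (s' Y * measure (Y i) UNIV))" using s' by simp
    show "(\<lambda>Y. s Y * (\<integral>x. g x \<partial>(Y i))) \<in> borel_measurable M"
      using s meas_int_M[OF sM g i] by measurable
    show "AE Y in M. norm (s Y * (\<integral>x. g x \<partial>(Y i))) \<le> norm (B * (s' Y * measure (Y i) UNIV))"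
    proof (rule AE_I2)
      fix Y assume Y: "Y \<in> space M"
      have YM: "Y i \<in> MF_set" by (rule space_MFl_D[OF sM Y i])
      have b: "\<bar>\<integral>x. g x \<partial>(Y i)\<bar> \<le> B * measure (Y i) UNIV" by (rule bcont_int_bound[OF g YM B(1)])
      have "0 \<le> s' Y" using le[OF Y] by linarith
      have "norm (s Y * (\<integral>x. g x \<partial>(Y i))) = \<bar>s Y\<bar> * \<bar>\<integral>x. g x \<partial>(Y i)\<bar>" by (simp add: abs_mult)
      also have "\<dots> \<le> s' Y * (B * measure (Y i) UNIV)"
        by (rule mult_mono[OF le[OF Y] b]) (use \<open>0 \<le> s' Y\<close> in auto)
      also have "\<dots> \<le> norm (B * (s' Y * measure (Y i) UNIV))"
        by (simp add: abs_mult B(2) \<open>0 \<le> s' Y\<close> mult_ac)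
      finally show "norm (s Y * (\<integral>x. g x \<partial>(Y i))) \<le> norm (B * (s' Y * measure (Y i) UNIV))" .
    qed
  qed
qed

lemma nn_weight:
  fixes g :: "'a::euclidean_space \<Rightarrow> real"
  assumes sM: "sets M = sets (MFl l)" and i: "i < l" and g: "bcont g" and gnn: "\<And>x. g x \<ge> 0"
    and r: "r \<in> borel_measurable M" and rnn: "\<And>Y. r Y \<ge> 0"
    and ri: "integrable M (\<lambda>Y. r Y * measure (Y i :: 'a measure) UNIV)"
  shows "(\<integral>\<^sup>+Y. ennreal (r Y) * (\<integral>\<^sup>+x. ennreal (g x) \<partial>(Y i)) \<partial>M) = ennreal (Tm M r i g)"
proof -
  have "(\<integral>\<^sup>+Y. ennreal (r Y) * (\<integral>\<^sup>+x. ennreal (g x) \<partial>(Y i)) \<partial>M) = (\<integral>\<^sup>+Y. ennreal (r Y * (\<integral>x. g x \<partial>(Y i))) \<partial>M)"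
  proof (rule nn_integral_cong)
    fix Y assume Y: "Y \<in> space M"
    have YM: "Y i \<in> MF_set" by (rule space_MFl_D[OF sM Y i])
    have "(\<integral>\<^sup>+x. ennreal (g x) \<partial>(Y i)) = ennreal (\<integral>x. g x \<partial>(Y i))"
      by (rule nn_integral_eq_integral[OF bcont_int[OF g YM]]) (simp add: gnn)
    moreover have "0 \<le> (\<integral>x. g x \<partial>(Y i))" by (simp add: gnn)
    ultimately show "ennreal (r Y) * (\<integral>\<^sup>+x. ennreal (g x) \<partial>(Y i)) = ennreal (r Y * (\<integral>x. g x \<partial>(Y i)))"
      by (simp add: ennreal_mult rnn)
  qed
  also have "\<dots> = ennreal (Tm M r i g)"
    unfolding Tm_def
    by (rule nn_integral_eq_integral[OF int_weight[OF sM i g r ri]]) (auto simp: rnn gnn)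
  finally show ?thesis .
qed

lemma Tm_nonneg:
  assumes "\<And>x. g x \<ge> 0" "\<And>Y. r Y \<ge> 0"
  shows "Tm M r i g \<ge> 0"
  unfolding Tm_def using assms by (auto intro!: integral_nonneg_AE AE_I2)

lemma mix_MF:
  fixes r r' :: "(nat \<Rightarrow> 'a::euclidean_space measure) \<Rightarrow> real"
  assumes sM: "sets M = sets (MFl l)" and sM': "sets M' = sets (MFl l)" and i: "i < l"
    and r: "r \<in> borel_measurable M" and rnn: "\<And>Y. r Y \<ge> 0"
    and ri: "integrable M (\<lambda>Y. r Y * measure (Y i :: 'a measure) UNIV)"
    and r': "r' \<in> borel_measurable M'" and rnn': "\<And>Y. r' Y \<ge> 0"
    and ri': "integrable M' (\<lambda>Y. r' Y * measure (Y i :: 'a measure) UNIV)"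
  shows "mix M (\<lambda>Y. ennreal (r Y)) M' (\<lambda>Y. ennreal (r' Y)) i \<in> MF_set"
    and "\<And>g. bcont g \<Longrightarrow> (\<forall>x. g x \<ge> 0) \<Longrightarrow> (\<integral>x. g x \<partial>mix M (\<lambda>Y. ennreal (r Y)) M' (\<lambda>Y. ennreal (r' Y)) i) = Tm M r i g + Tm M' r' i g"
proof -
  let ?L = "mix M (\<lambda>Y. ennreal (r Y)) M' (\<lambda>Y. ennreal (r' Y)) i"
  have w: "(\<lambda>Y. ennreal (r Y)) \<in> borel_measurable M" using r by measurable
  have w': "(\<lambda>Y. ennreal (r' Y)) \<in> borel_measurable M'" using r' by measurable
  have NN: "(\<integral>\<^sup>+x. ennreal (g x) \<partial>?L) = ennreal (Tm M r i g + Tm M' r' i g)"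
    if g: "bcont g" and gnn: "\<And>x. g x \<ge> 0" for g
  proof -
    have gm: "(\<lambda>x. ennreal (g x)) \<in> borel_measurable borel"
      using g unfolding bcont_def by (intro measurable_compose[OF borel_measurable_continuous_onI[of g] measurable_ennreal]) auto
    have "(\<integral>\<^sup>+x. ennreal (g x) \<partial>?L) = (\<integral>\<^sup>+Y. ennreal (r Y) * (\<integral>\<^sup>+x. ennreal (g x) \<partial>(Y i)) \<partial>M) + (\<integral>\<^sup>+Y. ennreal (r' Y) * (\<integral>\<^sup>+x. ennreal (g x) \<partial>(Y i)) \<partial>M')"
      using nn_mix[OF sM sM' i w w' gm] by simp
    also have "\<dots> = ennreal (Tm M r i g) + ennreal (Tm M' r' i g)"
      by (simp add: nn_weight[OF sM i g gnn r rnn ri] nn_weight[OF sM' i g gnn r' rnn' ri'])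
    also have "\<dots> = ennreal (Tm M r i g + Tm M' r' i g)"
      by (simp add: Tm_nonneg gnn rnn rnn')
    finally show ?thesis .
  qed
  have one: "bcont (\<lambda>_::'a. 1::real)" unfolding bcont_def by auto
  have "emeasure ?L (space ?L) = (\<integral>\<^sup>+x. ennreal 1 \<partial>?L)" by simp
  also have "\<dots> = ennreal (Tm M r i (\<lambda>_. 1) + Tm M' r' i (\<lambda>_. 1))" by (rule NN[OF one]) simp
  finally have "emeasure ?L (space ?L) \<noteq> \<infinity>" by simp
  hence "finite_measure ?L" by (rule finite_measureI)
  thus LM: "?L \<in> MF_set" unfolding MF_set_def by simp
  fix g :: "'a \<Rightarrow> real" assume g: "bcont g" and gnn: "\<forall>x. g x \<ge> 0"
  have "ennreal (\<integral>x. g x \<partial>?L) = (\<integral>\<^sup>+x. ennreal (g x) \<partial>?L)"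
    by (rule nn_integral_eq_integral[OF bcont_int[OF g LM], symmetric]) (simp add: gnn)
  also have "\<dots> = ennreal (Tm M r i g + Tm M' r' i g)" using NN[OF g] gnn by simp
  finally show "(\<integral>x. g x \<partial>?L) = Tm M r i g + Tm M' r' i g"
    using gnn by (subst (asm) ennreal_inj) (auto simp: Tm_nonneg rnn rnn' intro!: integral_nonneg_AE AE_I2 add_nonneg_nonneg)
qed



lemma bcont_pos: "bcont g \<Longrightarrow> bcont (\<lambda>x. max (g x) 0)"
proof -
  assume a: "bcont g"
  then obtain B where B: "\<And>x. norm (g x) \<le> B" unfolding bcont_def bounded_iff by blast
  hence "\<And>x. norm (max (g x) 0) \<le> B" by (smt (verit) real_norm_def)
  hence "bounded (range (\<lambda>x. max (g x) 0))" unfolding bounded_iff by blast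
  moreover have "continuous_on UNIV (\<lambda>x. max (g x) 0)" using a unfolding bcont_def by (intro continuous_intros) auto
  ultimately show ?thesis unfolding bcont_def by simp
qed

lemma bcont_uminus: "bcont g \<Longrightarrow> bcont (\<lambda>x. - g x)"
  unfolding bcont_def by (auto intro: continuous_intros simp: bounded_iff)

lemma Tm_gdiff:
  fixes g h :: "'a::euclidean_space \<Rightarrow> real"
  assumes sM: "sets M = sets (MFl l)" and i: "i < l" and g: "bcont g" and h: "bcont h"
    and s: "s \<in> borel_measurable M" and s': "integrable M (\<lambda>Y. s' Y * measure (Y i :: 'a measure) UNIV)"
    and le: "\<And>Y. Y \<in> space M \<Longrightarrow> \<bar>s Y\<bar> \<le> s' Y"
  shows "Tm M s i (\<lambda>x. g x - h x) = Tm M s i g - Tm M s i h"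
proof -
  have "Tm M s i (\<lambda>x. g x - h x) = (\<integral>Y. s Y * (\<integral>x. g x \<partial>(Y i)) - s Y * (\<integral>x. h x \<partial>(Y i)) \<partial>M)"
    unfolding Tm_def
  proof (rule Bochner_Integration.integral_cong[OF refl])
    fix Y assume Y: "Y \<in> space M"
    have YM: "Y i \<in> MF_set" by (rule space_MFl_D[OF sM Y i])
    show "s Y * (\<integral>x. g x - h x \<partial>(Y i)) = s Y * (\<integral>x. g x \<partial>(Y i)) - s Y * (\<integral>x. h x \<partial>(Y i))"
      by (simp add: Bochner_Integration.integral_diff[OF bcont_int[OF g YM] bcont_int[OF h YM]] right_diff_distrib)
  qed
  also have "\<dots> = Tm M s i g - Tm M s i h"
    unfolding Tm_def by (rule Bochner_Integration.integral_diff[OF int_weight[OF sM i g s s' le] int_weight[OF sM i h s s' le]])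
  finally show ?thesis .
qed

lemma Tm_rdiff:
  fixes g :: "'a::euclidean_space \<Rightarrow> real"
  assumes sM: "sets M = sets (MFl l)" and i: "i < l" and g: "bcont g"
    and s1: "s1 \<in> borel_measurable M" and s2: "s2 \<in> borel_measurable M"
    and s': "integrable M (\<lambda>Y. s' Y * measure (Y i :: 'a measure) UNIV)"
    and le1: "\<And>Y. Y \<in> space M \<Longrightarrow> \<bar>s1 Y\<bar> \<le> s' Y" and le2: "\<And>Y. Y \<in> space M \<Longrightarrow> \<bar>s2 Y\<bar> \<le> s' Y"
  shows "Tm M (\<lambda>Y. s1 Y - s2 Y) i g = Tm M s1 i g - Tm M s2 i g"
  unfolding Tm_def left_diff_distrib
  by (rule Bochner_Integration.integral_diff[OF int_weight[OF sM i g s1 s' le1] int_weight[OF sM i g s2 s' le2]])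

lemma mix_int:
  fixes r r' :: "(nat \<Rightarrow> 'a::euclidean_space measure) \<Rightarrow> real"
  assumes sM: "sets M = sets (MFl l)" and sM': "sets M' = sets (MFl l)" and i: "i < l"
    and r: "r \<in> borel_measurable M" and rnn: "\<And>Y. r Y \<ge> 0"
    and ri: "integrable M (\<lambda>Y. r Y * measure (Y i :: 'a measure) UNIV)"
    and r': "r' \<in> borel_measurable M'" and rnn': "\<And>Y. r' Y \<ge> 0"
    and ri': "integrable M' (\<lambda>Y. r' Y * measure (Y i :: 'a measure) UNIV)"
    and g: "bcont g"
  shows "(\<integral>x. g x \<partial>mix M (\<lambda>Y. ennreal (r Y)) M' (\<lambda>Y. ennreal (r' Y)) i) = Tm M r i g + Tm M' r' i g"
proof -
  let ?L = "mix M (\<lambda>Y. ennreal (r Y)) M' (\<lambda>Y. ennreal (r' Y)) i"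
  note MF = mix_MF[OF sM sM' i r rnn ri r' rnn' ri']
  have gp: "bcont (\<lambda>x. max (g x) 0)" and gm: "bcont (\<lambda>x. max (- g x) 0)"
    using bcont_pos[OF g] bcont_pos[OF bcont_uminus[OF g]] by auto
  have e: "g = (\<lambda>x. max (g x) 0 - max (- g x) 0)" by auto
  have le: "\<And>Y. \<bar>r Y\<bar> \<le> r Y" "\<And>Y. \<bar>r' Y\<bar> \<le> r' Y" using rnn rnn' by auto
  have "(\<integral>x. g x \<partial>?L) = (\<integral>x. max (g x) 0 \<partial>?L) - (\<integral>x. max (- g x) 0 \<partial>?L)"
    by (subst e, rule Bochner_Integration.integral_diff[OF bcont_int[OF gp MF(1)] bcont_int[OF gm MF(1)]])
  also have "\<dots> = (Tm M r i (\<lambda>x. max (g x) 0) - Tm M r i (\<lambda>x. max (- g x) 0))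
      + (Tm M' r' i (\<lambda>x. max (g x) 0) - Tm M' r' i (\<lambda>x. max (- g x) 0))"
    using MF(2)[OF gp] MF(2)[OF gm] by simp
  also have "\<dots> = Tm M r i g + Tm M' r' i g"
    by (subst (5 6) e, simp only: Tm_gdiff[OF sM i gp gm r ri le(1)] Tm_gdiff[OF sM' i gp gm r' ri' le(2)])
  finally show ?thesis .
qed



lemma meas_mass:
  assumes sM: "sets M = sets (MFl l)" and i: "i < l"
  shows "(\<lambda>Y. measure (Y i :: 'a::euclidean_space measure) UNIV) \<in> borel_measurable M"
  using meas_measure_open[OF open_UNIV i] sM by (simp cong: measurable_cong_sets)

lemma weight_bound:
  assumes sM: "sets M = sets (MFl l)" and i: "i < l"
    and r: "r \<in> borel_measurable M" and s': "integrable M (\<lambda>Y. s' Y * measure (Y i :: 'a::euclidean_space measure) UNIV)"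
    and le: "\<And>Y. \<bar>r Y\<bar> \<le> s' Y"
  shows "integrable M (\<lambda>Y. r Y * measure (Y i :: 'a measure) UNIV)"
proof (rule Bochner_Integration.integrable_bound[OF s'])
  show "(\<lambda>Y. r Y * measure (Y i) UNIV) \<in> borel_measurable M" using r meas_mass[OF sM i] by measurable
  show "AE Y in M. norm (r Y * measure (Y i) UNIV) \<le> norm (s' Y * measure (Y i) UNIV)"
    using le by (auto intro!: AE_I2 mult_right_mono simp: abs_mult) (metis abs_ge_self order_trans)
qed

lemma Tm_eq_from_F:
  fixes F :: "('a::euclidean_space \<Rightarrow> complex) set"
  assumes SF: "standing_F F" and sM: "sets M = sets (MFl l)" and sM': "sets M' = sets (MFl l)" and i: "i < l"
    and s: "s \<in> borel_measurable M" and sb: "s \<in> borel_measurable M'"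
    and w: "integrable M (\<lambda>Y. s' Y * measure (Y i :: 'a measure) UNIV)"
    and w': "integrable M' (\<lambda>Y. s' Y * measure (Y i :: 'a measure) UNIV)"
    and le: "\<And>Y. \<bar>s Y\<bar> \<le> s' Y"
    and hF: "\<And>f. f \<in> F \<Longrightarrow> Tm M s i (\<lambda>x. Re (f x)) = Tm M' s i (\<lambda>x. Re (f x)) \<and> Tm M s i (\<lambda>x. Im (f x)) = Tm M' s i (\<lambda>x. Im (f x))"
    and g: "bcont g"
  shows "Tm M s i g = Tm M' s i g"
proof -
  define r1 where "r1 Y = max (s Y) 0" for Y
  define r2 where "r2 Y = max (- s Y) 0" for Y
  have se: "s = (\<lambda>Y. r1 Y - r2 Y)" unfolding r1_def r2_def by auto
  have nn: "\<And>Y. r1 Y \<ge> 0" "\<And>Y. r2 Y \<ge> 0" unfolding r1_def r2_def by auto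
  have lr: "\<And>Y. \<bar>r1 Y\<bar> \<le> s' Y" "\<And>Y. \<bar>r2 Y\<bar> \<le> s' Y" unfolding r1_def r2_def using le
    by (smt (verit))+
  have m1: "r1 \<in> borel_measurable M" "r2 \<in> borel_measurable M" unfolding r1_def r2_def using s by measurable
  have m2: "r1 \<in> borel_measurable M'" "r2 \<in> borel_measurable M'" unfolding r1_def r2_def using sb by measurable
  have wi: "integrable M (\<lambda>Y. r1 Y * measure (Y i :: 'a measure) UNIV)" "integrable M (\<lambda>Y. r2 Y * measure (Y i :: 'a measure) UNIV)"
    using weight_bound[OF sM i m1(1) w lr(1)] weight_bound[OF sM i m1(2) w lr(2)] by auto
  have wi': "integrable M' (\<lambda>Y. r1 Y * measure (Y i :: 'a measure) UNIV)" "integrable M' (\<lambda>Y. r2 Y * measure (Y i :: 'a measure) UNIV)"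
    using weight_bound[OF sM' i m2(1) w' lr(1)] weight_bound[OF sM' i m2(2) w' lr(2)] by auto
  let ?L = "mix M (\<lambda>Y. ennreal (r1 Y)) M' (\<lambda>Y. ennreal (r2 Y)) i"
  let ?L' = "mix M' (\<lambda>Y. ennreal (r1 Y)) M (\<lambda>Y. ennreal (r2 Y)) i"
  have LM: "?L \<in> MF_set" by (rule mix_MF(1)[OF sM sM' i m1(1) nn(1) wi(1) m2(2) nn(2) wi'(2)])
  have LM': "?L' \<in> MF_set" by (rule mix_MF(1)[OF sM' sM i m2(1) nn(1) wi'(1) m1(2) nn(2) wi(2)])
  have key: "(\<integral>x. h x \<partial>?L) = (\<integral>x. h x \<partial>?L') \<longleftrightarrow> Tm M s i h = Tm M' s i h" if h: "bcont h" for h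
  proof -
    have "(\<integral>x. h x \<partial>?L) = Tm M r1 i h + Tm M' r2 i h"
      by (rule mix_int[OF sM sM' i m1(1) nn(1) wi(1) m2(2) nn(2) wi'(2) h])
    moreover have "(\<integral>x. h x \<partial>?L') = Tm M' r1 i h + Tm M r2 i h"
      by (rule mix_int[OF sM' sM i m2(1) nn(1) wi'(1) m1(2) nn(2) wi(2) h])
    moreover have "Tm M s i h = Tm M r1 i h - Tm M r2 i h"
      by (subst se, rule Tm_rdiff[OF sM i h m1 w]) (use lr in auto)
    moreover have "Tm M' s i h = Tm M' r1 i h - Tm M' r2 i h"
      by (subst se, rule Tm_rdiff[OF sM' i h m2 w']) (use lr in auto)
    ultimately show ?thesis by linarith
  qed
  have Fc: "\<And>f. f \<in> F \<Longrightarrow> cbc f" using SF unfolding standing_F_def cbc_def by blast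
  have "\<forall>f\<in>F. (\<lambda>n. \<integral>x. f x \<partial>?L) \<longlonglongrightarrow> (\<integral>x. f x \<partial>?L')"
  proof
    fix f assume f: "f \<in> F"
    have "(\<integral>x. Re (f x) \<partial>?L) = (\<integral>x. Re (f x) \<partial>?L')" "(\<integral>x. Im (f x) \<partial>?L) = (\<integral>x. Im (f x) \<partial>?L')"
      using key[OF cbc_Re[OF Fc[OF f]]] key[OF cbc_Im[OF Fc[OF f]]] hF[OF f] by auto
    hence "(\<integral>x. f x \<partial>?L) = (\<integral>x. f x \<partial>?L')"
      by (simp add: cbc_int(2)[OF Fc[OF f] LM] cbc_int(2)[OF Fc[OF f] LM'])
    thus "(\<lambda>n. \<integral>x. f x \<partial>?L) \<longlonglongrightarrow> (\<integral>x. f x \<partial>?L')" by simp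
  qed
  moreover have cd: "conv_determining F" using SF unfolding standing_F_def by blast
  ultimately have "weak_conv (\<lambda>n. ?L) ?L'"
    using cd[unfolded conv_determining_def, rule_format, of "\<lambda>n. ?L" ?L'] LM LM' by blast
  hence "(\<lambda>n. \<integral>x. g x \<partial>?L) \<longlonglongrightarrow> (\<integral>x. g x \<partial>?L')" using g unfolding weak_conv_def by blast
  hence "(\<integral>x. g x \<partial>?L) = (\<integral>x. g x \<partial>?L')" by (simp add: LIMSEQ_const_iff)
  thus ?thesis using key[OF g] by simp
qed



lemma cint_split:
  fixes a b :: "'b \<Rightarrow> real"
  assumes "integrable X a" "integrable X b"
  shows "integrable X (\<lambda>Y. complex_of_real (a Y) + \<i> * complex_of_real (b Y))"
    "(\<integral>Y. complex_of_real (a Y) + \<i> * complex_of_real (b Y) \<partial>X) = complex_of_real (\<integral>Y. a Y \<partial>X) + \<i> * complex_of_real (\<integral>Y. b Y \<partial>X)"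
proof -
  have i1: "integrable X (\<lambda>Y. complex_of_real (a Y))" using assms(1) by simp
  have i2: "integrable X (\<lambda>Y. \<i> * complex_of_real (b Y))" using assms(2) by simp
  show "integrable X (\<lambda>Y. complex_of_real (a Y) + \<i> * complex_of_real (b Y))"
    by (rule Bochner_Integration.integrable_add[OF i1 i2])
  show "(\<integral>Y. complex_of_real (a Y) + \<i> * complex_of_real (b Y) \<partial>X) = complex_of_real (\<integral>Y. a Y \<partial>X) + \<i> * complex_of_real (\<integral>Y. b Y \<partial>X)"
    by (subst Bochner_Integration.integral_add[OF i1 i2]) simp
qed

lemma Jsplit:
  fixes f :: "'a::euclidean_space \<Rightarrow> complex"
  assumes sM: "sets M = sets (MFl l)" and i: "i < l" and f: "cbc f"
    and s: "s \<in> borel_measurable M" and w: "integrable M (\<lambda>Y. s' Y * measure (Y i :: 'a measure) UNIV)"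
    and le: "\<And>Y. \<bar>s Y\<bar> \<le> s' Y"
  shows "(\<integral>Y. complex_of_real (s Y) * (\<integral>x. f x \<partial>(Y i)) \<partial>M)
     = complex_of_real (Tm M s i (\<lambda>x. Re (f x))) + \<i> * complex_of_real (Tm M s i (\<lambda>x. Im (f x)))"
proof -
  note ia = int_weight[OF sM i cbc_Re[OF f] s w le]
  note ib = int_weight[OF sM i cbc_Im[OF f] s w le]
  have "(\<integral>Y. complex_of_real (s Y) * (\<integral>x. f x \<partial>(Y i)) \<partial>M)
      = (\<integral>Y. complex_of_real (s Y * (\<integral>x. Re (f x) \<partial>(Y i))) + \<i> * complex_of_real (s Y * (\<integral>x. Im (f x) \<partial>(Y i))) \<partial>M)"
  proof (rule Bochner_Integration.integral_cong[OF refl])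
    fix Y assume Y: "Y \<in> space M"
    have YM: "Y i \<in> MF_set" by (rule space_MFl_D[OF sM Y i])
    show "complex_of_real (s Y) * (\<integral>x. f x \<partial>(Y i)) = complex_of_real (s Y * (\<integral>x. Re (f x) \<partial>(Y i))) + \<i> * complex_of_real (s Y * (\<integral>x. Im (f x) \<partial>(Y i)))"
      by (simp add: cbc_int(2)[OF f YM] algebra_simps)
  qed
  also have "\<dots> = complex_of_real (Tm M s i (\<lambda>x. Re (f x))) + \<i> * complex_of_real (Tm M s i (\<lambda>x. Im (f x)))"
    unfolding Tm_def by (rule cint_split(2)[OF ia ib])
  finally show ?thesis .
qed

lemma im_id: "complex_of_real (Im h) * z = (h * z - cnj h * z) / (2 * \<i>)"
proof -
  have "h * z - cnj h * z = (h - cnj h) * z" by (simp add: left_diff_distrib)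
  also have "\<dots> = (2 * \<i>) * (complex_of_real (Im h) * z)" by (simp add: complex_diff_cnj mult_ac)
  finally have e: "h * z - cnj h * z = (2 * \<i>) * (complex_of_real (Im h) * z)" .
  show ?thesis unfolding e by simp
qed

lemma re_id: "complex_of_real (Re h) * z = (h * z + cnj h * z) / 2"
proof -
  have "h * z + cnj h * z = (h + cnj h) * z" by (simp add: distrib_right)
  also have "\<dots> = complex_of_real (2 * Re h) * z" by (simp add: complex_add_cnj)
  finally show ?thesis by simp
qed

lemma JRe:
  fixes f :: "'a::euclidean_space \<Rightarrow> complex" and H :: "(nat \<Rightarrow> 'a measure) \<Rightarrow> complex"
  assumes sM: "sets M = sets (MFl l)" and i: "i < l" and f: "cbc f"
    and i1: "integrable M (\<lambda>Y. H Y * (\<integral>x. f x \<partial>(Y i)))"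
    and i2: "integrable M (\<lambda>Y. H Y * (\<integral>x. cnj (f x) \<partial>(Y i)))"
  shows "(\<integral>Y. complex_of_real (Re (H Y)) * (\<integral>x. f x \<partial>(Y i)) \<partial>M)
      = ((\<integral>Y. H Y * (\<integral>x. f x \<partial>(Y i)) \<partial>M) + cnj (\<integral>Y. H Y * (\<integral>x. cnj (f x) \<partial>(Y i)) \<partial>M)) / 2"
    and "(\<integral>Y. complex_of_real (Im (H Y)) * (\<integral>x. f x \<partial>(Y i)) \<partial>M)
      = ((\<integral>Y. H Y * (\<integral>x. f x \<partial>(Y i)) \<partial>M) - cnj (\<integral>Y. H Y * (\<integral>x. cnj (f x) \<partial>(Y i)) \<partial>M)) / (2 * \<i>)"
proof -
  have i2': "integrable M (\<lambda>Y. cnj (H Y * (\<integral>x. cnj (f x) \<partial>(Y i))))" by (rule integrable_cnj[OF i2])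
  have pw: "cnj (H Y * (\<integral>x. cnj (f x) \<partial>(Y i))) = cnj (H Y) * (\<integral>x. f x \<partial>(Y i))" for Y
    by simp
  have "(\<integral>Y. complex_of_real (Re (H Y)) * (\<integral>x. f x \<partial>(Y i)) \<partial>M)
     = (\<integral>Y. (H Y * (\<integral>x. f x \<partial>(Y i)) + cnj (H Y * (\<integral>x. cnj (f x) \<partial>(Y i)))) / 2 \<partial>M)"
    by (rule Bochner_Integration.integral_cong[OF refl]) (simp only: pw re_id)
  also have "\<dots> = ((\<integral>Y. H Y * (\<integral>x. f x \<partial>(Y i)) \<partial>M) + cnj (\<integral>Y. H Y * (\<integral>x. cnj (f x) \<partial>(Y i)) \<partial>M)) / 2"
    by (simp only: integral_divide_zero Bochner_Integration.integral_add[OF i1 i2'] Bochner_Integration.integral_cnj[of M "\<lambda>Y. H Y * (\<integral>x. cnj (f x) \<partial>(Y i))"])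
  finally show "(\<integral>Y. complex_of_real (Re (H Y)) * (\<integral>x. f x \<partial>(Y i)) \<partial>M)
      = ((\<integral>Y. H Y * (\<integral>x. f x \<partial>(Y i)) \<partial>M) + cnj (\<integral>Y. H Y * (\<integral>x. cnj (f x) \<partial>(Y i)) \<partial>M)) / 2" .
  have "(\<integral>Y. complex_of_real (Im (H Y)) * (\<integral>x. f x \<partial>(Y i)) \<partial>M)
     = (\<integral>Y. (H Y * (\<integral>x. f x \<partial>(Y i)) - cnj (H Y * (\<integral>x. cnj (f x) \<partial>(Y i)))) / (2 * \<i>) \<partial>M)"
    by (rule Bochner_Integration.integral_cong[OF refl]) (simp only: pw im_id)
  also have "\<dots> = ((\<integral>Y. H Y * (\<integral>x. f x \<partial>(Y i)) \<partial>M) - cnj (\<integral>Y. H Y * (\<integral>x. cnj (f x) \<partial>(Y i)) \<partial>M)) / (2 * \<i>)"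
    by (simp only: integral_divide_zero Bochner_Integration.integral_diff[OF i1 i2'] Bochner_Integration.integral_cnj[of M "\<lambda>Y. H Y * (\<integral>x. cnj (f x) \<partial>(Y i))"])
  finally show "(\<integral>Y. complex_of_real (Im (H Y)) * (\<integral>x. f x \<partial>(Y i)) \<partial>M)
      = ((\<integral>Y. H Y * (\<integral>x. f x \<partial>(Y i)) \<partial>M) - cnj (\<integral>Y. H Y * (\<integral>x. cnj (f x) \<partial>(Y i)) \<partial>M)) / (2 * \<i>)" .
qed



lemma CL:
  fixes F :: "('a::euclidean_space \<Rightarrow> complex) set" and H :: "(nat \<Rightarrow> 'a measure) \<Rightarrow> complex"
  assumes SF: "standing_F F" and sM: "sets M = sets (MFl l)" and sM': "sets M' = sets (MFl l)" and i: "i < l"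
    and Hm: "H \<in> borel_measurable M" and Hm': "H \<in> borel_measurable M'"
    and hyp: "\<And>f. f \<in> F \<Longrightarrow> integrable M (\<lambda>Y. H Y * (\<integral>x. f x \<partial>(Y i)))
         \<and> integrable M' (\<lambda>Y. H Y * (\<integral>x. f x \<partial>(Y i)))
         \<and> (\<integral>Y. H Y * (\<integral>x. f x \<partial>(Y i)) \<partial>M) = (\<integral>Y. H Y * (\<integral>x. f x \<partial>(Y i)) \<partial>M')"
    and g: "bcont g"
  shows "integrable M (\<lambda>Y. H Y * complex_of_real (\<integral>x. g x \<partial>(Y i)))
       \<and> integrable M' (\<lambda>Y. H Y * complex_of_real (\<integral>x. g x \<partial>(Y i)))
       \<and> (\<integral>Y. H Y * complex_of_real (\<integral>x. g x \<partial>(Y i)) \<partial>M) = (\<integral>Y. H Y * complex_of_real (\<integral>x. g x \<partial>(Y i)) \<partial>M')"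
proof -
  have Fc: "\<And>f. f \<in> F \<Longrightarrow> cbc f" using SF unfolding standing_F_def cbc_def by blast
  have Fcnj: "\<And>f. f \<in> F \<Longrightarrow> (\<lambda>x. cnj (f x)) \<in> F" using SF unfolding standing_F_def by blast
  have one: "(\<lambda>_. 1) \<in> F" using SF unfolding standing_F_def by blast
  define s' where "s' Y = cmod (H Y)" for Y
  have wgt: "integrable X (\<lambda>Y. s' Y * measure (Y i :: 'a measure) UNIV)"
    if sX: "sets X = sets (MFl l)" and iX: "integrable X (\<lambda>Y. H Y * (\<integral>x. 1 \<partial>(Y i :: 'a measure)))" for X
  proof -
    have "integrable X (\<lambda>Y. norm (H Y * (\<integral>x. 1 \<partial>(Y i :: 'a measure))))" using iX by (rule integrable_norm)
    then show ?thesis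
    proof (rule Bochner_Integration.integrable_cong[THEN iffD1, OF refl, rotated])
      fix Y assume "Y \<in> space X"
      hence YM: "Y i \<in> MF_set" by (rule space_MFl_D[OF sX _ i])
      show "norm (H Y * (\<integral>x. 1 \<partial>(Y i :: 'a measure))) = s' Y * measure (Y i) UNIV"
        using MF_setD(3)[OF YM] by (simp add: s'_def norm_mult)
    qed
  qed
  have w: "integrable M (\<lambda>Y. s' Y * measure (Y i :: 'a measure) UNIV)" using wgt[OF sM] hyp[OF one] by simp
  have w': "integrable M' (\<lambda>Y. s' Y * measure (Y i :: 'a measure) UNIV)" using wgt[OF sM'] hyp[OF one] by simp
  have leR: "\<And>Y. \<bar>Re (H Y)\<bar> \<le> s' Y" and leI: "\<And>Y. \<bar>Im (H Y)\<bar> \<le> s' Y"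
    unfolding s'_def by (auto simp: abs_Re_le_cmod abs_Im_le_cmod)
  have mR: "(\<lambda>Y. Re (H Y)) \<in> borel_measurable M" "(\<lambda>Y. Re (H Y)) \<in> borel_measurable M'"
    and mI: "(\<lambda>Y. Im (H Y)) \<in> borel_measurable M" "(\<lambda>Y. Im (H Y)) \<in> borel_measurable M'"
    using Hm Hm' by measurable
  have hF: "Tm M (\<lambda>Y. Re (H Y)) i (\<lambda>x. Re (f x)) = Tm M' (\<lambda>Y. Re (H Y)) i (\<lambda>x. Re (f x))
      \<and> Tm M (\<lambda>Y. Re (H Y)) i (\<lambda>x. Im (f x)) = Tm M' (\<lambda>Y. Re (H Y)) i (\<lambda>x. Im (f x))
      \<and> Tm M (\<lambda>Y. Im (H Y)) i (\<lambda>x. Re (f x)) = Tm M' (\<lambda>Y. Im (H Y)) i (\<lambda>x. Re (f x))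
      \<and> Tm M (\<lambda>Y. Im (H Y)) i (\<lambda>x. Im (f x)) = Tm M' (\<lambda>Y. Im (H Y)) i (\<lambda>x. Im (f x))"
    if f: "f \<in> F" for f
  proof -
    note h1 = hyp[OF f] and h2 = hyp[OF Fcnj[OF f]]
    have a: "(\<integral>Y. complex_of_real (Re (H Y)) * (\<integral>x. f x \<partial>(Y i)) \<partial>M) = (\<integral>Y. complex_of_real (Re (H Y)) * (\<integral>x. f x \<partial>(Y i)) \<partial>M')"
      using JRe(1)[OF sM i Fc[OF f] conjunct1[OF h1] conjunct1[OF h2]] JRe(1)[OF sM' i Fc[OF f] conjunct1[OF conjunct2[OF h1]] conjunct1[OF conjunct2[OF h2]]]
        conjunct2[OF conjunct2[OF h1]] conjunct2[OF conjunct2[OF h2]]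
      by (simp, metis mult_cancel_right mult_eq_0_iff zero_neq_numeral complex_i_not_zero)
    have b: "(\<integral>Y. complex_of_real (Im (H Y)) * (\<integral>x. f x \<partial>(Y i)) \<partial>M) = (\<integral>Y. complex_of_real (Im (H Y)) * (\<integral>x. f x \<partial>(Y i)) \<partial>M')"
      using JRe(2)[OF sM i Fc[OF f] conjunct1[OF h1] conjunct1[OF h2]] JRe(2)[OF sM' i Fc[OF f] conjunct1[OF conjunct2[OF h1]] conjunct1[OF conjunct2[OF h2]]]
        conjunct2[OF conjunct2[OF h1]] conjunct2[OF conjunct2[OF h2]]
      by metis
    show ?thesis
      using a b
      unfolding Jsplit[OF sM i Fc[OF f] mR(1) w leR] Jsplit[OF sM' i Fc[OF f] mR(2) w' leR]
        Jsplit[OF sM i Fc[OF f] mI(1) w leI] Jsplit[OF sM' i Fc[OF f] mI(2) w' leI]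
      by (simp add: complex_eq_iff)
  qed
  have TR: "Tm M (\<lambda>Y. Re (H Y)) i g = Tm M' (\<lambda>Y. Re (H Y)) i g"
    by (rule Tm_eq_from_F[OF SF sM sM' i mR w w' leR _ g]) (use hF in blast)
  have TI: "Tm M (\<lambda>Y. Im (H Y)) i g = Tm M' (\<lambda>Y. Im (H Y)) i g"
    by (rule Tm_eq_from_F[OF SF sM sM' i mI w w' leI _ g]) (use hF in blast)
  have pw: "H Y * complex_of_real (\<integral>x. g x \<partial>(Y i)) = complex_of_real (Re (H Y) * (\<integral>x. g x \<partial>(Y i))) + \<i> * complex_of_real (Im (H Y) * (\<integral>x. g x \<partial>(Y i)))" for Y
    by (simp add: complex_eq_iff)
  note iR = int_weight[OF sM i g mR(1) w leR] and iI = int_weight[OF sM i g mI(1) w leI]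
  note iR' = int_weight[OF sM' i g mR(2) w' leR] and iI' = int_weight[OF sM' i g mI(2) w' leI]
  show ?thesis
    unfolding pw using cint_split[OF iR iI] cint_split[OF iR' iI'] TR TI by (simp add: Tm_def)
qed



lemma prod_factor:
  fixes G :: "nat \<Rightarrow> nat \<Rightarrow> complex"
  assumes "i0 < l" "j0 < m i0"
  shows "(\<Prod>i<l. \<Prod>j<m i. G i j) = ((\<Prod>i\<in>{..<l}-{i0}. \<Prod>j<m i. G i j) * (\<Prod>j\<in>{..<m i0}-{j0}. G i0 j)) * G i0 j0"
proof -
  have "(\<Prod>i<l. \<Prod>j<m i. G i j) = (\<Prod>j<m i0. G i0 j) * (\<Prod>i\<in>{..<l}-{i0}. \<Prod>j<m i. G i j)"
    using assms by (intro prod.remove) auto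
  moreover have "(\<Prod>j<m i0. G i0 j) = G i0 j0 * (\<Prod>j\<in>{..<m i0}-{j0}. G i0 j)"
    using assms by (intro prod.remove) auto
  ultimately show ?thesis by (simp add: ac_simps)
qed

definition prodint :: "nat \<Rightarrow> (nat \<Rightarrow> nat) \<Rightarrow> (nat \<Rightarrow> nat \<Rightarrow> 'a::euclidean_space \<Rightarrow> complex) \<Rightarrow> (nat \<Rightarrow> 'a measure) \<Rightarrow> complex" where
  "prodint l m \<phi> Y = (\<Prod>i<l. \<Prod>j<m i. \<integral>x. \<phi> i j x \<partial>(Y i))"

lemma main_ind:
  fixes F :: "('a::euclidean_space \<Rightarrow> complex) set"
    and \<mu> \<mu>' :: "(nat \<Rightarrow> 'a measure) measure"
  assumes SF: "standing_F F"
    and sM: "sets \<mu> = sets (MFl l)" and sM': "sets \<mu>' = sets (MFl l)"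
    and hyp: "\<And>\<phi> :: nat \<Rightarrow> nat \<Rightarrow> 'a \<Rightarrow> complex.
           (\<forall>i<l. \<forall>j<m i. \<phi> i j \<in> F) \<Longrightarrow>
           integrable \<mu> (prodint l m \<phi>) \<and> integrable \<mu>' (prodint l m \<phi>)
         \<and> (\<integral>Y. prodint l m \<phi> Y \<partial>\<mu>) = (\<integral>Y. prodint l m \<phi> Y \<partial>\<mu>')"
    and \<psi>: "\<forall>i<l. \<forall>j<m i. bcont (\<psi> i j)"
    and S: "S \<subseteq> Sigma {..<l} (\<lambda>i. {..<m i})"
  shows "\<forall>\<phi>. (\<forall>i<l. \<forall>j<m i. if (i, j) \<in> S then \<phi> i j = (\<lambda>x. complex_of_real (\<psi> i j x)) else \<phi> i j \<in> F) \<longrightarrow>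
           integrable \<mu> (prodint l m \<phi>) \<and> integrable \<mu>' (prodint l m \<phi>)
         \<and> (\<integral>Y. prodint l m \<phi> Y \<partial>\<mu>) = (\<integral>Y. prodint l m \<phi> Y \<partial>\<mu>')"
proof -
  have fin: "finite (Sigma {..<l} (\<lambda>i. {..<m i}))" by auto
  have Fc: "\<And>f. f \<in> F \<Longrightarrow> cbc f" using SF unfolding standing_F_def cbc_def by blast
  from finite_subset[OF S fin] S show ?thesis
  proof (induction rule: finite_subset_induct)
    case empty
    then show ?case using hyp by simp
  next
    case (insert a S)
    obtain i0 j0 where a: "a = (i0, j0)" by (cases a)
    have i0: "i0 < l" and j0: "j0 < m i0" using insert(2) a by auto
    have aS: "(i0, j0) \<notin> S" using insert(3) a by simp
    show ?case
    proof (intro allI impI)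
      fix \<phi> :: "nat \<Rightarrow> nat \<Rightarrow> 'a \<Rightarrow> complex"
      assume \<phi>: "\<forall>i<l. \<forall>j<m i. if (i, j) \<in> insert a S then \<phi> i j = (\<lambda>x. complex_of_real (\<psi> i j x)) else \<phi> i j \<in> F"
      have cb: "cbc (\<phi> i j)" if "i < l" "j < m i" for i j
      proof (cases "(i, j) \<in> insert a S")
        case True
        hence "\<phi> i j = (\<lambda>x. complex_of_real (\<psi> i j x))" using \<phi> that by auto
        thus ?thesis using cbc_of_real[of "\<psi> i j"] \<psi> that by simp
      next
        case False
        hence "\<phi> i j \<in> F" using \<phi> that by auto
        thus ?thesis by (rule Fc)
      qed
      have \<phi>0: "\<phi> i0 j0 = (\<lambda>x. complex_of_real (\<psi> i0 j0 x))" using \<phi> i0 j0 a by auto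
      define H where "H Y = (\<Prod>i\<in>{..<l}-{i0}. \<Prod>j<m i. \<integral>x. \<phi> i j x \<partial>(Y i)) * (\<Prod>j\<in>{..<m i0}-{j0}. \<integral>x. \<phi> i0 j x \<partial>(Y i0))"
        for Y :: "nat \<Rightarrow> 'a measure"
      define \<phi>f where "\<phi>f f = \<phi>(i0 := (\<phi> i0)(j0 := f))" for f
      have pf: "prodint l m (\<phi>f f) Y = H Y * (\<integral>x. f x \<partial>(Y i0))" for f Y
      proof -
        have "prodint l m (\<phi>f f) Y = ((\<Prod>i\<in>{..<l}-{i0}. \<Prod>j<m i. \<integral>x. \<phi>f f i j x \<partial>(Y i)) * (\<Prod>j\<in>{..<m i0}-{j0}. \<integral>x. \<phi>f f i0 j x \<partial>(Y i0))) * (\<integral>x. \<phi>f f i0 j0 x \<partial>(Y i0))"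
          unfolding prodint_def by (rule prod_factor[where m=m, OF i0 j0])
        also have "\<dots> = H Y * (\<integral>x. f x \<partial>(Y i0))"
          unfolding H_def \<phi>f_def by (intro arg_cong2[where f="(*)"] prod.cong refl) auto
        finally show ?thesis .
      qed
      have p\<phi>: "prodint l m \<phi> Y = H Y * complex_of_real (\<integral>x. \<psi> i0 j0 x \<partial>(Y i0))" for Y
      proof -
        have "\<phi>f (\<phi> i0 j0) = \<phi>" unfolding \<phi>f_def by auto
        hence "prodint l m \<phi> Y = H Y * (\<integral>x. \<phi> i0 j0 x \<partial>(Y i0))" using pf[of "\<phi> i0 j0" Y] by simp
        thus ?thesis using \<phi>0 by simp
      qed
      have Hm: "H \<in> borel_measurable X" if sX: "sets X = sets (MFl l)" for X :: "(nat \<Rightarrow> 'a measure) measure"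
      proof -
        have mi: "(\<lambda>Y. \<integral>x. \<phi> i j x \<partial>(Y i)) \<in> borel_measurable X" if "i < l" "j < m i" for i j
          using meas_cint_MFl[OF cb[OF that] that(1)] sX by (simp cong: measurable_cong_sets)
        show ?thesis unfolding H_def[abs_def]
          using mi i0 by (intro borel_measurable_times borel_measurable_prod) auto
      qed
      have hypH: "integrable \<mu> (\<lambda>Y. H Y * (\<integral>x. f x \<partial>(Y i0))) \<and> integrable \<mu>' (\<lambda>Y. H Y * (\<integral>x. f x \<partial>(Y i0)))
          \<and> (\<integral>Y. H Y * (\<integral>x. f x \<partial>(Y i0)) \<partial>\<mu>) = (\<integral>Y. H Y * (\<integral>x. f x \<partial>(Y i0)) \<partial>\<mu>')" if f: "f \<in> F" for f
      proof -
        have "\<forall>i<l. \<forall>j<m i. if (i, j) \<in> S then \<phi>f f i j = (\<lambda>x. complex_of_real (\<psi> i j x)) else \<phi>f f i j \<in> F"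
        proof (intro allI impI)
          fix i j assume ij: "i < l" "j < m i"
          show "if (i, j) \<in> S then \<phi>f f i j = (\<lambda>x. complex_of_real (\<psi> i j x)) else \<phi>f f i j \<in> F"
          proof (cases "(i, j) = (i0, j0)")
            case True then show ?thesis using aS f unfolding \<phi>f_def by auto
          next
            case False
            hence "\<phi>f f i j = \<phi> i j" unfolding \<phi>f_def by auto
            thus ?thesis using \<phi> ij False a by auto
          qed
        qed
        hence "integrable \<mu> (prodint l m (\<phi>f f)) \<and> integrable \<mu>' (prodint l m (\<phi>f f))
         \<and> (\<integral>Y. prodint l m (\<phi>f f) Y \<partial>\<mu>) = (\<integral>Y. prodint l m (\<phi>f f) Y \<partial>\<mu>')" using insert(4) by blast
        thus ?thesis unfolding pf .
      qed
      have "integrable \<mu> (\<lambda>Y. H Y * complex_of_real (\<integral>x. \<psi> i0 j0 x \<partial>(Y i0)))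
       \<and> integrable \<mu>' (\<lambda>Y. H Y * complex_of_real (\<integral>x. \<psi> i0 j0 x \<partial>(Y i0)))
       \<and> (\<integral>Y. H Y * complex_of_real (\<integral>x. \<psi> i0 j0 x \<partial>(Y i0)) \<partial>\<mu>) = (\<integral>Y. H Y * complex_of_real (\<integral>x. \<psi> i0 j0 x \<partial>(Y i0)) \<partial>\<mu>')"
        by (rule CL[OF SF sM sM' i0 Hm[OF sM] Hm[OF sM'] hypH]) (use \<psi> i0 j0 in auto)
      then show "integrable \<mu> (prodint l m \<phi>) \<and> integrable \<mu>' (prodint l m \<phi>)
         \<and> (\<integral>Y. prodint l m \<phi> Y \<partial>\<mu>) = (\<integral>Y. prodint l m \<phi> Y \<partial>\<mu>')"
        unfolding p\<phi>[abs_def] .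
    qed
  qed
qed



theorem lemma3p5:
  fixes F :: "('a::euclidean_space \<Rightarrow> complex) set"
    and l :: nat and m :: "nat \<Rightarrow> nat"
    and \<mu> \<mu>' :: "(nat \<Rightarrow> 'a measure) measure"
  assumes "standing_F F"
    and "sets \<mu> = sets (MFl l)" and "finite_measure \<mu>"
    and "sets \<mu>' = sets (MFl l)" and "finite_measure \<mu>'"
    and "\<And>\<phi> :: nat \<Rightarrow> nat \<Rightarrow> 'a \<Rightarrow> complex.
           (\<forall>i<l. \<forall>j<m i. \<phi> i j \<in> F) \<Longrightarrow>
           integrable \<mu> (\<lambda>Y. \<Prod>i<l. \<Prod>j<m i. \<integral>x. \<phi> i j x \<partial>(Y i))
         \<and> integrable \<mu>' (\<lambda>Y. \<Prod>i<l. \<Prod>j<m i. \<integral>x. \<phi> i j x \<partial>(Y i))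
         \<and> (\<integral>Y. (\<Prod>i<l. \<Prod>j<m i. \<integral>x. \<phi> i j x \<partial>(Y i)) \<partial>\<mu>)
           = (\<integral>Y. (\<Prod>i<l. \<Prod>j<m i. \<integral>x. \<phi> i j x \<partial>(Y i)) \<partial>\<mu>')"
    and "\<forall>i<l. \<forall>j<m i. bcont (\<psi> i j) \<and> (\<forall>x. \<psi> i j x \<ge> 0)"
  shows "(\<integral>\<^sup>+Y. ennreal (\<Prod>i<l. \<Prod>j<m i. \<integral>x. \<psi> i j x \<partial>(Y i)) \<partial>\<mu>)
       = (\<integral>\<^sup>+Y. ennreal (\<Prod>i<l. \<Prod>j<m i. \<integral>x. \<psi> i j x \<partial>(Y i)) \<partial>\<mu>')"
proof -
  let ?R = "\<lambda>Y. \<Prod>i<l. \<Prod>j<m i. \<integral>x. \<psi> i j x \<partial>(Y i)"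
  define \<phi> where "\<phi> i j x = complex_of_real (\<psi> i j x)" for i j x
  have hyp': "\<And>\<phi> :: nat \<Rightarrow> nat \<Rightarrow> 'a \<Rightarrow> complex.
           (\<forall>i<l. \<forall>j<m i. \<phi> i j \<in> F) \<Longrightarrow>
           integrable \<mu> (prodint l m \<phi>) \<and> integrable \<mu>' (prodint l m \<phi>)
         \<and> (\<integral>Y. prodint l m \<phi> Y \<partial>\<mu>) = (\<integral>Y. prodint l m \<phi> Y \<partial>\<mu>')"
    using assms(6) unfolding prodint_def[abs_def] by blast
  have \<psi>b: "\<forall>i<l. \<forall>j<m i. bcont (\<psi> i j)" using assms(7) by blast
  have "\<forall>\<phi>. (\<forall>i<l. \<forall>j<m i. if (i, j) \<in> Sigma {..<l} (\<lambda>i. {..<m i}) then \<phi> i j = (\<lambda>x. complex_of_real (\<psi> i j x)) else \<phi> i j \<in> F) \<longrightarrow>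
           integrable \<mu> (prodint l m \<phi>) \<and> integrable \<mu>' (prodint l m \<phi>)
         \<and> (\<integral>Y. prodint l m \<phi> Y \<partial>\<mu>) = (\<integral>Y. prodint l m \<phi> Y \<partial>\<mu>')"
    using main_ind[OF assms(1) assms(2) assms(4) hyp' \<psi>b subset_refl] by simp
  hence C: "integrable \<mu> (prodint l m \<phi>) \<and> integrable \<mu>' (prodint l m \<phi>)
         \<and> (\<integral>Y. prodint l m \<phi> Y \<partial>\<mu>) = (\<integral>Y. prodint l m \<phi> Y \<partial>\<mu>')"
    unfolding \<phi>_def by (auto simp: fun_eq_iff)
  have pe: "prodint l m \<phi> = (\<lambda>Y. complex_of_real (?R Y))"
    unfolding prodint_def[abs_def] \<phi>_def by simp
  have iR1: "integrable \<mu> (\<lambda>Y. Re (prodint l m \<phi> Y))" "integrable \<mu>' (\<lambda>Y. Re (prodint l m \<phi> Y))"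
    using C by (auto intro: integrable_Re)
  have iR: "integrable \<mu> ?R" "integrable \<mu>' ?R"
    using iR1 by (simp_all only: pe Re_complex_of_real)
  have eR0: "(\<integral>Y. prodint l m \<phi> Y \<partial>\<mu>) = (\<integral>Y. prodint l m \<phi> Y \<partial>\<mu>')" using C by blast
  have eR: "(\<integral>Y. ?R Y \<partial>\<mu>) = (\<integral>Y. ?R Y \<partial>\<mu>')"
    using eR0 by (simp only: pe integral_complex_of_real of_real_eq_iff)
  have nn: "0 \<le> ?R Y" for Y
    using assms(7) by (auto intro!: prod_nonneg integral_nonneg_AE AE_I2)
  have "(\<integral>\<^sup>+Y. ennreal (?R Y) \<partial>\<mu>) = ennreal (\<integral>Y. ?R Y \<partial>\<mu>)"
    by (rule nn_integral_eq_integral[OF iR(1)]) (simp add: nn)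
  also have "\<dots> = ennreal (\<integral>Y. ?R Y \<partial>\<mu>')" by (simp add: eR)
  also have "\<dots> = (\<integral>\<^sup>+Y. ennreal (?R Y) \<partial>\<mu>')"
    by (rule nn_integral_eq_integral[OF iR(2), symmetric]) (simp add: nn)
  finally show ?thesis .
qed


end
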